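(* Let $d$ be a positive integer, let $F$ be a Young diagram, and let $w\in\{+,-\}^k$ be the type sequence encoding the outer boundary of $F$. (a) For any $d$-RSK growth diagram on $F$, the sequence of partitions $\lambda^{(0)},\ldots,\lambda^{(k)}$ assigned to the lattice points on the outer boundary of $F$ (listed in order starting from the point on the positive $x$-axis) is a $d$-semistandard $w$-oscillating tableau, and the filling of the diagram avoids the pattern $d\cdots1(d+1)$. (b) Every filling of $F$ that avoids the pattern $d\cdots 1(d+1)$ extends uniquely to a $d$-RSK growth diagram on $F$ (i.e. there is a unique assignment of partitions to the lattice points of $F$ making it a $d$-RSK growth diagram with that filling). (c) Every $d$-semistandard $w$-oscillating tableau, assigned in order to the lattice points along the outer boundary of $F$ (starting from the point on the positive $x$-axis), extends uniquely to a $d$-RSK growth diagram on $F$ (i.e. there is a unique filling of $F$ and a unique assignment of partitions to the remaining lattice points making it a $d$-RSK growth diagram). Consequently, there is an explicit bijection between fillings of $F$ that avoid the pattern $d\cdots1(d+1)$ and $d$-semistandard $w$-oscillating tableaux.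
   Context: Partitions: finite weakly decreasing sequences of positive integers, with $\lambda_i=0$ for $i>\ell(\lambda)$; $|\lambda|=\sum\lambda_i$; a $d$-partition has $\ell(\lambda)\le d$. Interlacing: $\alpha\prec\beta$ (also written $\beta\succ\alpha$) means $\beta_1\ge\alpha_1\ge\beta_2\ge\alpha_2\ge\beta_3\ge\cdots$. Young diagrams are drawn in the first quadrant, made of unit cells with integer-lattice-point corners, left-justified with row 1 adjacent to the $x$-axis (English conventions reflected: rows stack upward). Its lattice points are the corners of its cells. A filling assigns a nonnegative integer entry to each cell. The outer boundary of a nonempty Young diagram is the lattice path from the positive $x$-axis to the positive $y$-axis consisting of unit steps up or left; its type sequence records `$+$' for each up step and `$-$' for each left step, in order. A filling contains the pattern $d\cdots1(d+1)$ if there are $d+1$ cells with nonzero entries $c_1,\dots,c_{d+1}$ such that each $c_{i+1}$ ($i<d$) lies strictly below and strictly to the right of $c_i$, and $c_{d+1}$ lies strictly above and strictly to the right of each of $c_1,\dots,c_d$; otherwise it avoids the pattern. A $d$-RSK growth diagram on $F$ consists of a filling of $F$ and an assignment of a partition to each lattice point of $F$, such that every lattice point on the coordinate axes is assigned $\emptyset$, and every cell satisfies the $d$-RSK local rule: if the cell has entry $m$ and its bottom-left, top-left, bottom-right, top-right corners are assigned $\kappa,\mu,\nu,\rho$, then all four are $d$-partitions, $\mu\succ\kappa\prec\nu$, $\mu\prec\rho\succ\nu$, $m=0$ or $\kappa_d=0$, and $\rho_1+\kappa_d=m+\min(\mu_d,\nu_d)+\max(\mu_1,\nu_1)$ and $\rho_i+\kappa_{i-1}=\min(\mu_{i-1},\nu_{i-1})+\max(\mu_i,\nu_i)$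 for $2\le i\le d$. For a type sequence $w=w_1\cdots w_r$, a semistandard $w$-oscillating tableau is a sequence of partitions $\emptyset=\lambda^{(0)},\lambda^{(1)},\ldots,\lambda^{(r)}=\emptyset$ with $\lambda^{(i-1)}\prec\lambda^{(i)}$ if $w_i=+$ and $\lambda^{(i-1)}\succ\lambda^{(i)}$ if $w_i=-$; it is $d$-semistandard if all $\lambda^{(i)}$ are $d$-partitions. *)

theory Defs
  imports Main
begin

text \<open>A partition is a finite weakly decreasing list of positive integers.
  part lam i is the 1-indexed part lam_i, which is 0 for i > length lam (and for i = 0).\<close>

definition is_partition :: "nat list \<Rightarrow> bool" where
  "is_partition xs \<longleftrightarrow> sorted_wrt (\<ge>) xs \<and> 0 \<notin> set xs"

definition part :: "nat list \<Rightarrow> nat \<Rightarrow> nat" where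
  "part lam i = (if 1 \<le> i \<and> i \<le> length lam then lam ! (i - 1) else 0)"

definition d_partition :: "nat \<Rightarrow> nat list \<Rightarrow> bool" where
  "d_partition d lam \<longleftrightarrow> is_partition lam \<and> length lam \<le> d"

text \<open>Interlacing: interlaces alpha beta means alpha \<prec> beta, i.e.
  beta_1 \<ge> alpha_1 \<ge> beta_2 \<ge> alpha_2 \<ge> ...\<close>
definition interlaces :: "nat list \<Rightarrow> nat list \<Rightarrow> bool" where
  "interlaces alpha beta \<longleftrightarrow>
     (\<forall>i\<ge>1. part alpha i \<le> part beta i \<and> part beta (Suc i) \<le> part alpha i)"

text \<open>A Young diagram F is given by the partition of its row lengths (row 1 first, adjacent
  to the x-axis). A cell is identified by its bottom-left corner (x,y); it lies in F iff
  y < length F and x < F ! y.\<close>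

definition cell :: "nat list \<Rightarrow> nat \<times> nat \<Rightarrow> bool" where
  "cell F c \<longleftrightarrow> snd c < length F \<and> fst c < F ! snd c"

definition lattice_point :: "nat list \<Rightarrow> nat \<times> nat \<Rightarrow> bool" where
  "lattice_point F p \<longleftrightarrow>
     (\<exists>x y. cell F (x, y) \<and> fst p \<in> {x, Suc x} \<and> snd p \<in> {y, Suc y})"

text \<open>Outer boundary: lattice path from (F_1, 0) to (0, length F) with unit up/left steps.
  From (x,y) one steps up iff the right edge of row y+1 lies at x.\<close>

definition step_up :: "nat list \<Rightarrow> nat \<times> nat \<Rightarrow> bool" where
  "step_up F p \<longleftrightarrow> snd p < length F \<and> F ! snd p = fst p"

definition bstep :: "nat list \<Rightarrow> nat \<times> nat \<Rightarrow> nat \<times> nat" where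
  "bstep F p = (if step_up F p then (fst p, Suc (snd p)) else (fst p - 1, snd p))"

fun bpt :: "nat list \<Rightarrow> nat \<Rightarrow> nat \<times> nat" where
  "bpt F 0 = (hd F, 0)"
| "bpt F (Suc i) = bstep F (bpt F i)"

definition boundary_len :: "nat list \<Rightarrow> nat" where
  "boundary_len F = hd F + length F"

text \<open>Type sequence of the outer boundary: True encodes '+' (up step), False '-' (left step).\<close>
definition type_seq :: "nat list \<Rightarrow> bool list" where
  "type_seq F = map (\<lambda>i. step_up F (bpt F i)) [0..<boundary_len F]"

definition contains_pattern :: "nat \<Rightarrow> nat list \<Rightarrow> (nat \<times> nat \<Rightarrow> nat) \<Rightarrow> bool" where
  "contains_pattern d F m \<longleftrightarrow>
     (\<exists>c :: nat \<Rightarrow> nat \<times> nat.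
        (\<forall>i\<in>{1..Suc d}. cell F (c i) \<and> m (c i) \<noteq> 0) \<and>
        (\<forall>i\<in>{1..<d}. fst (c i) < fst (c (Suc i)) \<and> snd (c (Suc i)) < snd (c i)) \<and>
        (\<forall>i\<in>{1..d}. fst (c i) < fst (c (Suc d)) \<and> snd (c i) < snd (c (Suc d))))"

definition avoids_pattern :: "nat \<Rightarrow> nat list \<Rightarrow> (nat \<times> nat \<Rightarrow> nat) \<Rightarrow> bool" where
  "avoids_pattern d F m \<longleftrightarrow> \<not> contains_pattern d F m"

definition rsk_local_rule :: "nat \<Rightarrow> nat \<Rightarrow> nat list \<Rightarrow> nat list \<Rightarrow> nat list \<Rightarrow> nat list \<Rightarrow> bool" where
  "rsk_local_rule d m kappa mu nu rho \<longleftrightarrow>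
     d_partition d kappa \<and> d_partition d mu \<and> d_partition d nu \<and> d_partition d rho \<and>
     interlaces kappa mu \<and> interlaces kappa nu \<and> interlaces mu rho \<and> interlaces nu rho \<and>
     (m = 0 \<or> part kappa d = 0) \<and>
     part rho 1 + part kappa d = m + min (part mu d) (part nu d) + max (part mu 1) (part nu 1) \<and>
     (\<forall>i\<in>{2..d}. part rho i + part kappa (i - 1) =
        min (part mu (i - 1)) (part nu (i - 1)) + max (part mu i) (part nu i))"

text \<open>m is the filling (only its values on cells of F matter), P assigns partitions to
  lattice points (only its values on lattice points of F matter).\<close>
definition growth_diagram ::
  "nat \<Rightarrow> nat list \<Rightarrow> (nat \<times> nat \<Rightarrow> nat) \<Rightarrow> (nat \<times> nat \<Rightarrow> nat list) \<Rightarrow> bool" where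
  "growth_diagram d F m P \<longleftrightarrow>
     (\<forall>p. lattice_point F p \<and> (fst p = 0 \<or> snd p = 0) \<longrightarrow> P p = []) \<and>
     (\<forall>x y. cell F (x, y) \<longrightarrow>
        rsk_local_rule d (m (x, y)) (P (x, y)) (P (x, Suc y)) (P (Suc x, y)) (P (Suc x, Suc y)))"

definition d_osc_tableau :: "nat \<Rightarrow> bool list \<Rightarrow> (nat \<Rightarrow> nat list) \<Rightarrow> bool" where
  "d_osc_tableau d w lam \<longleftrightarrow>
     lam 0 = [] \<and> lam (length w) = [] \<and>
     (\<forall>i\<le>length w. d_partition d (lam i)) \<and>
     (\<forall>i\<in>{1..length w}. if w ! (i - 1) then interlaces (lam (i - 1)) (lam i)
                                         else interlaces (lam i) (lam (i - 1)))"

end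

theory Submission
  imports Defs
begin


lemma part0[simp]: "part a 0 = 0" by (simp add: part_def)

lemma part_big: "length a < i \<Longrightarrow> part a i = 0" by (simp add: part_def)

lemma dpart_big: "d_partition d a \<Longrightarrow> d < i \<Longrightarrow> part a i = 0"
  by (simp add: d_partition_def part_def)

lemma part_Nil[simp]: "part [] i = 0" by (simp add: part_def)

lemma part_anti: "is_partition a \<Longrightarrow> 1 \<le> i \<Longrightarrow> part a (Suc i) \<le> part a i"
proof -
  assume a: "is_partition a" "1 \<le> i"
  show ?thesis
  proof (cases "Suc i \<le> length a")
    case True
    have "a ! i \<le> a ! (i - 1)"
      using sorted_wrt_nth_less[of "(\<ge>)" a "i-1" i] a True unfolding is_partition_def by simp
    then show ?thesis using True a by (simp add: part_def)
  next
    case False then show ?thesis by (simp add: part_def)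
  qed
qed

lemma part_anti2: "i \<le> j \<Longrightarrow> is_partition a \<Longrightarrow> 1 \<le> i \<Longrightarrow> part a j \<le> part a i"
proof (induction j rule: dec_induct)
  case base then show ?case by simp
next
  case (step n) then show ?case using part_anti[of a n] by simp
qed

lemma part_pos: "is_partition a \<Longrightarrow> 1 \<le> i \<Longrightarrow> i \<le> length a \<Longrightarrow> 0 < part a i"
proof -
  assume h: "is_partition a" "1 \<le> i" "i \<le> length a"
  have "a ! (i - 1) \<in> set a" using h by (intro nth_mem) simp
  then have "a ! (i - 1) \<noteq> 0" using h(1) unfolding is_partition_def by metis
  then show ?thesis using h by (simp add: part_def)
qed

lemma dpart_eq:
  assumes "d_partition d a" "d_partition d b" "\<forall>i. 1 \<le> i \<longrightarrow> i \<le> d \<longrightarrow> part a i = part b i"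
  shows "a = b"
proof -
  have la: "length a \<le> d" "length b \<le> d" "is_partition a" "is_partition b"
    using assms by (auto simp: d_partition_def)
  have len: "length a = length b"
  proof (rule ccontr)
    assume "length a \<noteq> length b"
    then consider "length a < length b" | "length b < length a" by linarith
    then show False
    proof cases
      case 1
      then have "0 < part b (length b)" using part_pos[OF la(4)] by simp
      moreover have "part a (length b) = 0" using 1 part_big by simp
      moreover have "1 \<le> length b" "length b \<le> d" using 1 la by auto
      ultimately show False using assms(3) by fastforce
    next
      case 2
      then have "0 < part a (length a)" using part_pos[OF la(3)] by simp
      moreover have "part b (length a) = 0" using 2 part_big by simp
      moreover have "1 \<le> length a" "length a \<le> d" using 2 la by auto
      ultimately show False using assms(3) by fastforce
    qed
  qed
  show ?thesis
  proof (rule nth_equalityI)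
    show "length a = length b" by (rule len)
    fix i assume i: "i < length a"
    have "part a (Suc i) = part b (Suc i)" using assms(3) i la by auto
    then show "a ! i = b ! i" using i len by (simp add: part_def)
  qed
qed

definition mkp :: "nat \<Rightarrow> (nat \<Rightarrow> nat) \<Rightarrow> nat list" where
  "mkp d f = takeWhile (\<lambda>v. 0 < v) (map f [1..<Suc d])"

lemma mkp_ok:
  assumes anti: "\<And>i. 1 \<le> i \<Longrightarrow> i < d \<Longrightarrow> f (Suc i) \<le> f i"
  shows "d_partition d (mkp d f)" "\<And>i. 1 \<le> i \<Longrightarrow> i \<le> d \<Longrightarrow> part (mkp d f) i = f i"
proof -
  let ?L = "map f [1..<Suc d]"
  have ant2: "f j \<le> f i" if "1 \<le> i" "i \<le> j" "j \<le> d" for i j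
    using that(2)
  proof (induction j rule: dec_induct)
    case base then show ?case by simp
  next
    case (step n) then show ?case using anti[of n] that by simp
  qed
  have sL: "sorted_wrt (\<ge>) ?L"
    unfolding sorted_wrt_map
    by (rule sorted_wrt_mono_rel[OF _ sorted_wrt_upt]) (auto intro!: ant2)
  have "sorted_wrt (\<ge>) (mkp d f)"
    unfolding mkp_def using sL by simp
  moreover have "0 \<notin> set (mkp d f)" unfolding mkp_def by (auto dest: set_takeWhileD)
  moreover have "length (mkp d f) \<le> d"
  proof -
    have "length (takeWhile (\<lambda>v. 0 < v) ?L) \<le> length ?L" by (rule length_takeWhile_le)
    then show ?thesis unfolding mkp_def by (simp del: upt_Suc)
  qed
  ultimately show "d_partition d (mkp d f)" by (simp add: d_partition_def is_partition_def)
  fix i assume i: "1 \<le> i" "i \<le> d"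
  show "part (mkp d f) i = f i"
  proof (cases "i \<le> length (mkp d f)")
    case True
    then have "mkp d f ! (i - 1) = ?L ! (i - 1)" unfolding mkp_def
      using True i by (simp add: takeWhile_nth)
    then show ?thesis using True i by (simp add: part_def del: upt_Suc)
  next
    case False
    let ?n = "length (mkp d f)"
    have n: "?n < d" using False i by simp
    have nL: "length (takeWhile (\<lambda>v. 0 < v) ?L) < length ?L" using n unfolding mkp_def by (simp del: upt_Suc)
    have "\<not> 0 < ?L ! ?n" using nth_length_takeWhile[OF nL] unfolding mkp_def .
    then have "f (Suc ?n) = 0" using n by (simp del: upt_Suc)
    moreover have "f i \<le> f (Suc ?n)" using False i by (intro ant2) auto
    ultimately show ?thesis using False by (simp add: part_def)
  qed
qed

lemma interl_D1: "interlaces a b \<Longrightarrow> 1 \<le> i \<Longrightarrow> part a i \<le> part b i"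
  by (simp add: interlaces_def)
lemma interl_D2: "interlaces a b \<Longrightarrow> 1 \<le> i \<Longrightarrow> part b (Suc i) \<le> part a i"
  by (simp add: interlaces_def)

lemma interl_I:
  assumes "d_partition d a" "d_partition d b"
    "\<And>i. 1 \<le> i \<Longrightarrow> i \<le> d \<Longrightarrow> part a i \<le> part b i"
    "\<And>i. 1 \<le> i \<Longrightarrow> i < d \<Longrightarrow> part b (Suc i) \<le> part a i"
  shows "interlaces a b"
  unfolding interlaces_def
proof (intro allI impI conjI)
  fix i :: nat assume i: "1 \<le> i"
  show "part a i \<le> part b i"
  proof (cases "i \<le> d")
    case True then show ?thesis using assms(3) i by blast
  next
    case False then show ?thesis using dpart_big[OF assms(1), of i] by simp
  qed
  show "part b (Suc i) \<le> part a i"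
  proof (cases "i < d")
    case True then show ?thesis using assms(4) i by blast
  next
    case False then show ?thesis using dpart_big[OF assms(2), of "Suc i"] by simp
  qed
qed

lemma interl_Nil: "interlaces a [] \<Longrightarrow> d_partition d a \<Longrightarrow> a = []"
proof -
  assume h: "interlaces a []" "d_partition d a"
  have eq: "\<forall>i. 1 \<le> i \<longrightarrow> i \<le> d \<longrightarrow> part a i = part [] i"
    using interl_D1[OF h(1)] by simp
  have dn: "d_partition d []" by (simp add: d_partition_def is_partition_def)
  show ?thesis by (rule dpart_eq[OF h(2) dn eq])
qed



definition rule_eqs :: "nat \<Rightarrow> nat \<Rightarrow> nat list \<Rightarrow> nat list \<Rightarrow> nat list \<Rightarrow> nat list \<Rightarrow> bool" where
  "rule_eqs d m kappa mu nu rho \<longleftrightarrow>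
     d_partition d kappa \<and> d_partition d mu \<and> d_partition d nu \<and> d_partition d rho \<and>
     interlaces kappa mu \<and> interlaces kappa nu \<and> interlaces mu rho \<and> interlaces nu rho \<and>
     part rho 1 + part kappa d = m + min (part mu d) (part nu d) + max (part mu 1) (part nu 1) \<and>
     (\<forall>i\<in>{2..d}. part rho i + part kappa (i - 1) =
        min (part mu (i - 1)) (part nu (i - 1)) + max (part mu i) (part nu i))"

lemma rsk_rule_iff: "rsk_local_rule d m kappa mu nu rho \<longleftrightarrow> rule_eqs d m kappa mu nu rho \<and> (m = 0 \<or> part kappa d = 0)"
  unfolding rsk_local_rule_def rule_eqs_def by auto

definition fwdf :: "nat \<Rightarrow> nat \<Rightarrow> nat list \<Rightarrow> nat list \<Rightarrow> nat list \<Rightarrow> nat \<Rightarrow> nat" where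
  "fwdf d m ka mu nu i = (if i = 1 then m + min (part mu d) (part nu d) + max (part mu 1) (part nu 1) - part ka d
     else min (part mu (i-1)) (part nu (i-1)) + max (part mu i) (part nu i) - part ka (i-1))"

definition fwd :: "nat \<Rightarrow> nat \<Rightarrow> nat list \<Rightarrow> nat list \<Rightarrow> nat list \<Rightarrow> nat list" where
  "fwd d m ka mu nu = mkp d (fwdf d m ka mu nu)"

lemma fwd_ok:
  assumes d: "1 \<le> d" and dk: "d_partition d ka" and dm: "d_partition d mu" and dn: "d_partition d nu"
    and km: "interlaces ka mu" and kn: "interlaces ka nu"
  shows "rule_eqs d m ka mu nu (fwd d m ka mu nu)"
proof -
  let ?f = "fwdf d m ka mu nu"
  have A1: "part ka i \<le> part mu i" "part ka i \<le> part nu i" if "1 \<le> i" for i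
    using interl_D1[OF km that] interl_D1[OF kn that] by auto
  have A2: "part mu (Suc i) \<le> part ka i" "part nu (Suc i) \<le> part ka i" if "1 \<le> i" for i
    using interl_D2[OF km that] interl_D2[OF kn that] by auto
  have f1: "?f 1 = m + min (part mu d) (part nu d) + max (part mu 1) (part nu 1) - part ka d"
    by (simp add: fwdf_def)
  have fi: "?f i = min (part mu (i-1)) (part nu (i-1)) + max (part mu i) (part nu i) - part ka (i-1)"
    if "2 \<le> i" for i using that by (simp add: fwdf_def)
  have fge: "max (part mu i) (part nu i) \<le> ?f i" if "1 \<le> i" for i
  proof (cases "i = 1")
    case True
    then show ?thesis using A1[OF d] f1 by (auto simp: min_def max_def split: if_splits)
  next
    case False
    then have "2 \<le> i" using that by (auto simp: min_def max_def split: if_splits)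
    moreover have "part ka (i-1) \<le> part mu (i-1)" "part ka (i-1) \<le> part nu (i-1)"
      using A1[of "i-1"] \<open>2 \<le> i\<close> by auto
    ultimately show ?thesis using fi by (auto simp: min_def max_def split: if_splits)
  qed
  have fle: "?f (Suc i) \<le> min (part mu i) (part nu i)" if "1 \<le> i" for i
  proof -
    have "?f (Suc i) = min (part mu i) (part nu i) + max (part mu (Suc i)) (part nu (Suc i)) - part ka i"
      using fi[of "Suc i"] that by (auto simp: min_def max_def split: if_splits)
    then show ?thesis using A2[OF that] by (auto simp: min_def max_def split: if_splits)
  qed
  have anti: "?f (Suc i) \<le> ?f i" if "1 \<le> i" "i < d" for i
    using fle[OF that(1)] fge[OF that(1)] by (auto simp: min_def max_def split: if_splits)
  have mk1: "d_partition d (mkp d ?f)" using mkp_ok(1)[of d ?f] anti by blast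
  have mk2: "part (mkp d ?f) i = ?f i" if "1 \<le> i" "i \<le> d" for i
    using mkp_ok(2)[of d ?f i] anti that by blast
  let ?r = "fwd d m ka mu nu"
  have dr: "d_partition d ?r" using mk1 by (simp add: fwd_def)
  have pr: "part ?r i = ?f i" if "1 \<le> i" "i \<le> d" for i using mk2[OF that] by (simp add: fwd_def)
  have "interlaces mu ?r"
    by (rule interl_I[OF dm dr]) (use pr fge fle in fastforce)+
  moreover have "interlaces nu ?r"
    by (rule interl_I[OF dn dr]) (use pr fge fle in fastforce)+
  moreover have "part ?r 1 + part ka d = m + min (part mu d) (part nu d) + max (part mu 1) (part nu 1)"
    using pr[of 1] d f1 A1[OF d] by (auto simp: min_def max_def split: if_splits)
  moreover have "\<forall>i\<in>{2..d}. part ?r i + part ka (i - 1) =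
        min (part mu (i - 1)) (part nu (i - 1)) + max (part mu i) (part nu i)"
  proof
    fix i assume i: "i \<in> {2..d}"
    have "part ka (i-1) \<le> part mu (i-1)" "part ka (i-1) \<le> part nu (i-1)"
      using A1[of "i-1"] i by auto
    then show "part ?r i + part ka (i - 1) =
        min (part mu (i - 1)) (part nu (i - 1)) + max (part mu i) (part nu i)"
      using pr[of i] fi[of i] i by (auto simp: min_def max_def split: if_splits)
  qed
  ultimately show ?thesis unfolding rule_eqs_def using dk dm dn dr km kn by blast
qed

definition bwdf :: "nat \<Rightarrow> nat list \<Rightarrow> nat list \<Rightarrow> nat list \<Rightarrow> nat \<Rightarrow> nat" where
  "bwdf d mu nu rho i = (if i < d then min (part mu i) (part nu i) + max (part mu (Suc i)) (part nu (Suc i)) - part rho (Suc i)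
     else min (part mu d) (part nu d) + max (part mu 1) (part nu 1) - part rho 1)"

definition bwdk :: "nat \<Rightarrow> nat list \<Rightarrow> nat list \<Rightarrow> nat list \<Rightarrow> nat list" where
  "bwdk d mu nu rho = mkp d (bwdf d mu nu rho)"

definition bwdm :: "nat \<Rightarrow> nat list \<Rightarrow> nat list \<Rightarrow> nat list \<Rightarrow> nat" where
  "bwdm d mu nu rho = part rho 1 - (min (part mu d) (part nu d) + max (part mu 1) (part nu 1))"

lemma bwd_ok:
  assumes d: "1 \<le> d" and dm: "d_partition d mu" and dn: "d_partition d nu" and dr: "d_partition d rho"
    and mr: "interlaces mu rho" and nr: "interlaces nu rho"
  shows "rsk_local_rule d (bwdm d mu nu rho) (bwdk d mu nu rho) mu nu rho"
proof -
  let ?f = "bwdf d mu nu rho"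
  have B1: "part mu i \<le> part rho i" "part nu i \<le> part rho i" if "1 \<le> i" for i
    using interl_D1[OF mr that] interl_D1[OF nr that] by auto
  have B2: "part rho (Suc i) \<le> part mu i" "part rho (Suc i) \<le> part nu i" if "1 \<le> i" for i
    using interl_D2[OF mr that] interl_D2[OF nr that] by auto
  have fi: "?f i = min (part mu i) (part nu i) + max (part mu (Suc i)) (part nu (Suc i)) - part rho (Suc i)"
    if "i < d" for i using that by (simp add: bwdf_def)
  have fd: "?f d = min (part mu d) (part nu d) + max (part mu 1) (part nu 1) - part rho 1"
    by (simp add: bwdf_def)
  have fge: "max (part mu (Suc i)) (part nu (Suc i)) \<le> ?f i" if "1 \<le> i" "i < d" for i
    using fi[OF that(2)] B2[OF that(1)] by (auto simp: min_def max_def split: if_splits)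
  have fle: "?f i \<le> min (part mu i) (part nu i)" if "1 \<le> i" "i \<le> d" for i
  proof (cases "i < d")
    case True
    then show ?thesis using fi[OF True] B1[of "Suc i"] by (auto simp: min_def max_def split: if_splits)
  next
    case False
    then have "i = d" using that by (auto simp: min_def max_def split: if_splits)
    then show ?thesis using fd B1[of 1] by (auto simp: min_def max_def split: if_splits)
  qed
  have anti: "?f (Suc i) \<le> ?f i" if "1 \<le> i" "i < d" for i
    using fle[of "Suc i"] fge[OF that] that by (auto simp: min_def max_def split: if_splits)
  have mk1: "d_partition d (mkp d ?f)" using mkp_ok(1)[of d ?f] anti by blast
  have mk2: "part (mkp d ?f) i = ?f i" if "1 \<le> i" "i \<le> d" for i
    using mkp_ok(2)[of d ?f i] anti that by blast
  let ?k = "bwdk d mu nu rho"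
  have dk: "d_partition d ?k" using mk1 by (simp add: bwdk_def)
  have pk: "part ?k i = ?f i" if "1 \<le> i" "i \<le> d" for i using mk2[OF that] by (simp add: bwdk_def)
  have km: "interlaces ?k mu"
    by (rule interl_I[OF dk dm]) (use pk fge fle in fastforce)+
  moreover have kn: "interlaces ?k nu"
    by (rule interl_I[OF dk dn]) (use pk fge fle in fastforce)+
  moreover have "part rho 1 + part ?k d = bwdm d mu nu rho + min (part mu d) (part nu d) + max (part mu 1) (part nu 1)"
    using pk[of d] d fd by (auto simp: bwdm_def min_def max_def split: if_splits)
  moreover have "\<forall>i\<in>{2..d}. part rho i + part ?k (i - 1) =
        min (part mu (i - 1)) (part nu (i - 1)) + max (part mu i) (part nu i)"
  proof
    fix i assume i: "i \<in> {2..d}"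
    have "part rho i \<le> part mu (i-1)" "part rho i \<le> part nu (i-1)"
      using B2[of "i-1"] i by auto
    moreover have "part mu i \<le> part rho i" "part nu i \<le> part rho i" using B1[of i] i by auto
    ultimately show "part rho i + part ?k (i - 1) =
        min (part mu (i - 1)) (part nu (i - 1)) + max (part mu i) (part nu i)"
      using pk[of "i-1"] fi[of "i-1"] i by (auto simp: min_def max_def split: if_splits)
  qed
  moreover have "bwdm d mu nu rho = 0 \<or> part ?k d = 0"
    using pk[of d] d fd by (auto simp: bwdm_def min_def max_def split: if_splits)
  ultimately show ?thesis unfolding rsk_local_rule_def using dk dm dn dr mr nr by blast
qed

lemma fwd_unique:
  assumes d: "1 \<le> d" and r: "rule_eqs d m ka mu nu rho"
  shows "rho = fwd d m ka mu nu"
proof -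
  have R: "d_partition d ka" "d_partition d mu" "d_partition d nu" "d_partition d rho"
    "interlaces ka mu" "interlaces ka nu"
    using r by (auto simp: rule_eqs_def)
  have F: "rule_eqs d m ka mu nu (fwd d m ka mu nu)" by (rule fwd_ok[OF d R(1) R(2) R(3) R(5) R(6)])
  show ?thesis
  proof (rule dpart_eq[of d])
    show "d_partition d rho" by (rule R(4))
    show "d_partition d (fwd d m ka mu nu)" using F by (simp add: rule_eqs_def)
    show "\<forall>i. 1 \<le> i \<longrightarrow> i \<le> d \<longrightarrow> part rho i = part (fwd d m ka mu nu) i"
    proof (intro allI impI)
      fix i assume i: "1 \<le> i" "i \<le> d"
      show "part rho i = part (fwd d m ka mu nu) i"
      proof (cases "i = 1")
        case True
        then show ?thesis using r F by (simp add: rule_eqs_def)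
      next
        case False
        then have "i \<in> {2..d}" using i by (auto simp: min_def max_def split: if_splits)
        then show ?thesis using r F unfolding rule_eqs_def by (metis add_right_imp_eq)
      qed
    qed
  qed
qed

lemma bwd_unique:
  assumes d: "1 \<le> d" and r: "rsk_local_rule d m ka mu nu rho"
  shows "ka = bwdk d mu nu rho" "m = bwdm d mu nu rho"
proof -
  have R: "d_partition d ka" "d_partition d mu" "d_partition d nu" "d_partition d rho"
    "interlaces mu rho" "interlaces nu rho"
    using r by (auto simp: rsk_local_rule_def)
  have B: "rsk_local_rule d (bwdm d mu nu rho) (bwdk d mu nu rho) mu nu rho" by (rule bwd_ok[OF d R(2-6)])
  have eqd: "part ka d = part (bwdk d mu nu rho) d \<and> m = bwdm d mu nu rho"
    using r B unfolding rsk_local_rule_def by (auto simp: bwdm_def)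
  then show "m = bwdm d mu nu rho" by (auto simp: min_def max_def split: if_splits)
  show "ka = bwdk d mu nu rho"
  proof (rule dpart_eq[of d])
    show "d_partition d ka" by (rule R(1))
    show "d_partition d (bwdk d mu nu rho)" using B by (simp add: rsk_local_rule_def)
    show "\<forall>i. 1 \<le> i \<longrightarrow> i \<le> d \<longrightarrow> part ka i = part (bwdk d mu nu rho) i"
    proof (intro allI impI)
      fix i assume i: "1 \<le> i" "i \<le> d"
      show "part ka i = part (bwdk d mu nu rho) i"
      proof (cases "i = d")
        case True
        then show ?thesis using eqd by (auto simp: min_def max_def split: if_splits)
      next
        case False
        then have "Suc i \<in> {2..d}" using i by (auto simp: min_def max_def split: if_splits)
        then have "part rho (Suc i) + part ka i = min (part mu i) (part nu i) + max (part mu (Suc i)) (part nu (Suc i))"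
          "part rho (Suc i) + part (bwdk d mu nu rho) i = min (part mu i) (part nu i) + max (part mu (Suc i)) (part nu (Suc i))"
          using r B unfolding rsk_local_rule_def by (metis diff_Suc_1)+
        then show ?thesis by (auto simp: min_def max_def split: if_splits)
      qed
    qed
  qed
qed



definition Mc :: "(nat \<times> nat \<Rightarrow> nat) \<Rightarrow> nat \<Rightarrow> nat \<Rightarrow> bool" where
  "Mc V x y \<longleftrightarrow> max (V (x, Suc y)) (V (Suc x, y)) < V (Suc x, Suc y)"

definition Ph :: "(nat \<times> nat \<Rightarrow> nat) \<Rightarrow> nat \<Rightarrow> nat \<Rightarrow> bool" where
  "Ph V x y \<longleftrightarrow> V (x, y) < min (V (x, Suc y)) (V (Suc x, y))"

definition sechain :: "(nat \<times> nat) set \<Rightarrow> nat \<Rightarrow> nat \<Rightarrow> nat \<Rightarrow> bool" where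
  "sechain S X Y j \<longleftrightarrow> (\<exists>c. (\<forall>i<j. c i \<in> S \<and> fst (c i) < X \<and> snd (c i) < Y) \<and>
      (\<forall>i. Suc i < j \<longrightarrow> fst (c i) < fst (c (Suc i)) \<and> snd (c (Suc i)) < snd (c i)))"

definition gridok :: "(nat \<times> nat \<Rightarrow> nat) \<Rightarrow> nat \<Rightarrow> nat \<Rightarrow> bool" where
  "gridok V X Y \<longleftrightarrow> (\<forall>x y. x < X \<longrightarrow> y \<le> Y \<longrightarrow> V (x, y) \<le> V (Suc x, y)) \<and>
     (\<forall>x y. x \<le> X \<longrightarrow> y < Y \<longrightarrow> V (x, y) \<le> V (x, Suc y)) \<and>
     (\<forall>y\<le>Y. V (0, y) = 0) \<and> (\<forall>x\<le>X. V (x, 0) = 0)"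

lemma sechain_mono:
  "sechain S X Y j \<Longrightarrow> (\<And>x y. x < X \<Longrightarrow> y < Y \<Longrightarrow> (x, y) \<in> S \<Longrightarrow> (x, y) \<in> T) \<Longrightarrow> sechain T X Y j"
  unfolding sechain_def by (metis prod.collapse)

lemma sechain_shrink:
  "sechain S X Y j \<Longrightarrow> X \<le> X' \<Longrightarrow> Y \<le> Y' \<Longrightarrow> sechain S X' Y' j"
  unfolding sechain_def by (meson less_le_trans)

lemma gridok_x: "x \<le> x' \<Longrightarrow> gridok V X Y \<Longrightarrow> x' \<le> X \<Longrightarrow> y \<le> Y \<Longrightarrow> V (x, y) \<le> V (x', y)"
proof (induction x' rule: dec_induct)
  case base then show ?case by simp
next
  case (step n)
  have "V (x, y) \<le> V (n, y)" using step.IH step.prems by simp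
  moreover have "V (n, y) \<le> V (Suc n, y)" using step.prems unfolding gridok_def by simp
  ultimately show ?case by simp
qed

lemma gridok_y: "y \<le> y' \<Longrightarrow> gridok V X Y \<Longrightarrow> x \<le> X \<Longrightarrow> y' \<le> Y \<Longrightarrow> V (x, y) \<le> V (x, y')"
proof (induction y' rule: dec_induct)
  case base then show ?case by simp
next
  case (step n)
  have "V (x, y) \<le> V (x, n)" using step.IH step.prems by simp
  moreover have "V (x, n) \<le> V (x, Suc n)" using step.prems unfolding gridok_def by simp
  ultimately show ?case by simp
qed

lemma gridok_mono: "gridok V X Y \<Longrightarrow> x \<le> x' \<Longrightarrow> x' \<le> X \<Longrightarrow> y \<le> y' \<Longrightarrow> y' \<le> Y \<Longrightarrow> V (x, y) \<le> V (x', y')"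
proof -
  assume h: "gridok V X Y" "x \<le> x'" "x' \<le> X" "y \<le> y'" "y' \<le> Y"
  have "V (x, y) \<le> V (x', y)" using gridok_x[OF h(2,1,3)] h by simp
  also have "\<dots> \<le> V (x', y')" using gridok_y[OF h(4,1,3,5)] .
  finally show ?thesis .
qed

lemma gridok_sub: "gridok V X Y \<Longrightarrow> X' \<le> X \<Longrightarrow> Y' \<le> Y \<Longrightarrow> gridok V X' Y'"
  unfolding gridok_def by auto

lemma row_wit:
  assumes g: "gridok V X Y" and y: "y < Y"
  shows "x \<le> X \<Longrightarrow> V (x, y) < V (x, Suc y) \<Longrightarrow> \<exists>u<x. Mc V u y"
proof (induction x)
  case 0
  then show ?case using g y unfolding gridok_def by simp
next
  case (Suc n)
  show ?case
  proof (cases "V (n, y) < V (n, Suc y)")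
    case True
    then show ?thesis using Suc by (meson Suc_leD less_SucI)
  next
    case False
    have m1: "V (n, y) \<le> V (Suc n, y)" using g Suc.prems y unfolding gridok_def by simp
    have m2: "V (n, y) \<le> V (n, Suc y)" using g Suc.prems y unfolding gridok_def by simp
    have "Mc V n y" unfolding Mc_def using False m1 m2 Suc.prems(2) by simp
    then show ?thesis by blast
  qed
qed

lemma col_wit:
  assumes g: "gridok V X Y" and x: "x < X"
  shows "y \<le> Y \<Longrightarrow> V (x, y) < V (Suc x, y) \<Longrightarrow> \<exists>v<y. Mc V x v"
proof (induction y)
  case 0
  then show ?case using g x unfolding gridok_def by simp
next
  case (Suc n)
  show ?case
  proof (cases "V (x, n) < V (Suc x, n)")
    case True
    then show ?thesis using Suc by (meson Suc_leD less_SucI)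
  next
    case False
    have m1: "V (x, n) \<le> V (Suc x, n)" using g Suc.prems x unfolding gridok_def by simp
    have m2: "V (x, n) \<le> V (x, Suc n)" using g Suc.prems x unfolding gridok_def by simp
    have "Mc V x n" unfolding Mc_def using False m1 m2 Suc.prems(2) by simp
    then show ?thesis by blast
  qed
qed

lemma col_inc:
  assumes g: "gridok V X Y"
  shows "y \<le> Y \<Longrightarrow> 0 < V (X, y) \<Longrightarrow> \<exists>v<y. V (X, v) < V (X, Suc v)"
proof (induction y)
  case 0 then show ?case using g unfolding gridok_def by simp
next
  case (Suc n)
  then show ?case by (metis Suc_leD gr0I less_Suc_eq)
qed

lemma pos_wit: "gridok V X Y \<Longrightarrow> 0 < V (X, Y) \<Longrightarrow> \<exists>x<X. \<exists>y<Y. Mc V x y"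
proof -
  assume g: "gridok V X Y" and p: "0 < V (X, Y)"
  obtain v where v: "v < Y" "V (X, v) < V (X, Suc v)" using col_inc[OF g _ p] by blast
  show ?thesis using row_wit[OF g v(1) _ v(2)] v(1) by blast
qed

lemma wit_pos: "gridok V X Y \<Longrightarrow> Mc V x y \<Longrightarrow> x < X \<Longrightarrow> y < Y \<Longrightarrow> 0 < V (X, Y)"
proof -
  assume g: "gridok V X Y" and m: "Mc V x y" and xy: "x < X" "y < Y"
  have "0 < V (Suc x, Suc y)" using m unfolding Mc_def by simp
  also have "V (Suc x, Suc y) \<le> V (X, Y)" using gridok_mono[OF g] xy by simp
  finally show ?thesis .
qed

lemma walkA:
  assumes g: "gridok V X Y" and y: "y < Y" and u0: "V (x0, y) < V (x0, Suc y)"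
  shows "x0 \<le> x1 \<Longrightarrow> x1 \<le> X \<Longrightarrow> (\<exists>x. x0 \<le> x \<and> x < x1 \<and> Ph V x y) \<or> V (x1, y) < V (x1, Suc y)"
proof (induction x1 rule: dec_induct)
  case base then show ?case using u0 by simp
next
  case (step n)
  show ?case
  proof (cases "\<exists>x. x0 \<le> x \<and> x < n \<and> Ph V x y")
    case True
    then obtain x2 where h: "x0 \<le> x2" "x2 < n" "Ph V x2 y" by blast
    have "x2 < Suc n" using h(2) by simp
    then show ?thesis using h(1,3) by blast
  next
    case False
    have "n \<le> X" using step.prems by simp
    then have "(\<exists>x. x0 \<le> x \<and> x < n \<and> Ph V x y) \<or> V (n, y) < V (n, Suc y)" using step.IH by simp
    then have U: "V (n, y) < V (n, Suc y)" using False by metis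
    show ?thesis
    proof (cases "Ph V n y")
      case True
      show ?thesis by (rule disjI1, rule exI[where x=n]) (simp add: True step(1))
    next
      case False
      have m1: "V (n, y) \<le> V (Suc n, y)" "V (n, Suc y) \<le> V (Suc n, Suc y)"
        using g step.prems y unfolding gridok_def by auto
      have "V (Suc n, y) = V (n, y)" using False U m1 unfolding Ph_def by simp
      then show ?thesis using U m1 by simp
    qed
  qed
qed

lemma walkB:
  assumes g: "gridok V X Y" and x: "x < X" and r0: "V (x, y0) < V (Suc x, y0)"
  shows "y0 \<le> y1 \<Longrightarrow> y1 \<le> Y \<Longrightarrow> (\<exists>y. y0 \<le> y \<and> y < y1 \<and> Ph V x y) \<or> V (x, y1) < V (Suc x, y1)"
proof (induction y1 rule: dec_induct)
  case base then show ?case using r0 by simp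
next
  case (step n)
  show ?case
  proof (cases "\<exists>y. y0 \<le> y \<and> y < n \<and> Ph V x y")
    case True
    then obtain y2 where h: "y0 \<le> y2" "y2 < n" "Ph V x y2" by blast
    have "y2 < Suc n" using h(2) by simp
    then show ?thesis using h(1,3) by blast
  next
    case False
    have "n \<le> Y" using step.prems by simp
    then have "(\<exists>y. y0 \<le> y \<and> y < n \<and> Ph V x y) \<or> V (x, n) < V (Suc x, n)" using step.IH by simp
    then have R: "V (x, n) < V (Suc x, n)" using False by metis
    show ?thesis
    proof (cases "Ph V x n")
      case True
      show ?thesis by (rule disjI1, rule exI[where x=n]) (simp add: True step(1))
    next
      case False
      have m1: "V (x, n) \<le> V (x, Suc n)" "V (Suc x, n) \<le> V (Suc x, Suc n)"
        using g step.prems x unfolding gridok_def by auto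
      have "V (x, Suc n) = V (x, n)" using False R m1 unfolding Ph_def by simp
      then show ?thesis using R m1 by simp
    qed
  qed
qed

lemma box1:
  assumes g: "gridok V X Y" and a: "Mc V xa ya" and b: "Mc V xb yb"
    and o: "xa < xb" "yb < ya" "xb < X" "ya < Y"
  shows "\<exists>x y. xa < x \<and> x \<le> xb \<and> yb < y \<and> y \<le> ya \<and> Ph V x y"
proof -
  have U: "V (Suc xa, ya) < V (Suc xa, Suc ya)" using a unfolding Mc_def by simp
  have R: "V (xb, Suc yb) < V (Suc xb, Suc yb)" using b unfolding Mc_def by simp
  have A: "(\<exists>x. Suc xa \<le> x \<and> x < xb \<and> Ph V x ya) \<or> V (xb, ya) < V (xb, Suc ya)"
    using walkA[OF g o(4) U, of xb] o by simp
  have B: "(\<exists>y. Suc yb \<le> y \<and> y < ya \<and> Ph V xb y) \<or> V (xb, ya) < V (Suc xb, ya)"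
    using walkB[OF g o(3) R, of ya] o by simp
  show ?thesis
  proof (cases "\<exists>x. Suc xa \<le> x \<and> x < xb \<and> Ph V x ya")
    case True then show ?thesis using o by (metis Suc_le_eq less_imp_le order_refl)
  next
    case F1: False
    show ?thesis
    proof (cases "\<exists>y. Suc yb \<le> y \<and> y < ya \<and> Ph V xb y")
      case True then show ?thesis using o by (metis Suc_le_eq less_imp_le order_refl)
    next
      case False
      have a1: "V (xb, ya) < V (xb, Suc ya)" using A F1 by blast
      have a2: "V (xb, ya) < V (Suc xb, ya)" using B False by blast
      have "Ph V xb ya" using a1 a2 unfolding Ph_def by simp
      then show ?thesis using o by blast
    qed
  qed
qed

lemma walkC:
  assumes g: "gridok V X Y" and u: "u < X"
  shows "v0 \<le> v1 \<Longrightarrow> v1 \<le> Y \<Longrightarrow> V (u, v1) < V (Suc u, v1) \<Longrightarrow>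
    (\<exists>v. v0 \<le> v \<and> v < v1 \<and> Mc V u v) \<or> V (u, v0) < V (Suc u, v0)"
proof (induction v1 rule: dec_induct)
  case base then show ?case by simp
next
  case (step n)
  show ?case
  proof (cases "Mc V u n")
    case True
    show ?thesis by (rule disjI1, rule exI[where x=n]) (simp add: True step(1))
  next
    case False
    have m1: "V (u, n) \<le> V (u, Suc n)" "V (Suc u, n) \<le> V (Suc u, Suc n)"
      using g step.prems u unfolding gridok_def by auto
    have "V (Suc u, n) = V (Suc u, Suc n)" using False step.prems(2) m1 unfolding Mc_def by simp
    then have "V (u, n) < V (Suc u, n)" using step.prems(2) m1 by simp
    then have "(\<exists>v. v0 \<le> v \<and> v < n \<and> Mc V u v) \<or> V (u, v0) < V (Suc u, v0)"
      using step.IH step.prems by simp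
    then show ?thesis using less_SucI by blast
  qed
qed

lemma walkD:
  assumes g: "gridok V X Y" and v: "v < Y"
  shows "u0 \<le> u1 \<Longrightarrow> u1 \<le> X \<Longrightarrow> V (u1, v) < V (u1, Suc v) \<Longrightarrow>
    (\<exists>u. u0 \<le> u \<and> u < u1 \<and> Mc V u v) \<or> V (u0, v) < V (u0, Suc v)"
proof (induction u1 rule: dec_induct)
  case base then show ?case by simp
next
  case (step n)
  show ?case
  proof (cases "Mc V n v")
    case True
    show ?thesis by (rule disjI1, rule exI[where x=n]) (simp add: True step(1))
  next
    case False
    have m1: "V (n, v) \<le> V (Suc n, v)" "V (n, Suc v) \<le> V (Suc n, Suc v)"
      using g step.prems v unfolding gridok_def by auto
    have "V (n, Suc v) = V (Suc n, Suc v)" using False step.prems(2) m1 unfolding Mc_def by simp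
    then have "V (n, v) < V (n, Suc v)" using step.prems(2) m1 by simp
    then have "(\<exists>u. u0 \<le> u \<and> u < n \<and> Mc V u v) \<or> V (u0, v) < V (u0, Suc v)"
      using step.IH step.prems by simp
    then show ?thesis using less_SucI by blast
  qed
qed

lemma box2:
  assumes g: "gridok V X Y" and c: "Ph V x y" and c': "Ph V x' y'"
    and o: "x < x'" "y' < y" "x' < X" "y < Y"
  shows "\<exists>u v. x \<le> u \<and> u < x' \<and> y' \<le> v \<and> v < y \<and> Mc V u v"
proof -
  have R: "V (x, y) < V (Suc x, y)" using c unfolding Ph_def by simp
  have U: "V (x', y') < V (x', Suc y')" using c' unfolding Ph_def by simp
  have C: "(\<exists>v. Suc y' \<le> v \<and> v < y \<and> Mc V x v) \<or> V (x, Suc y') < V (Suc x, Suc y')"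
    using walkC[OF g, of x "Suc y'" y] o R by simp
  have D: "(\<exists>u. Suc x \<le> u \<and> u < x' \<and> Mc V u y') \<or> V (Suc x, y') < V (Suc x, Suc y')"
    using walkD[OF g, of y' "Suc x" x'] o U by simp
  show ?thesis
  proof (cases "\<exists>v. Suc y' \<le> v \<and> v < y \<and> Mc V x v")
    case True then show ?thesis using o by (metis Suc_leD order_refl)
  next
    case F1: False
    show ?thesis
    proof (cases "\<exists>u. Suc x \<le> u \<and> u < x' \<and> Mc V u y'")
      case True then show ?thesis using o by (metis Suc_leD order_refl)
    next
      case False
      have a1: "V (x, Suc y') < V (Suc x, Suc y')" using C F1 by blast
      have a2: "V (Suc x, y') < V (Suc x, Suc y')" using D False by blast
      have "Mc V x y'" using a1 a2 unfolding Mc_def by simp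
      then show ?thesis using o by blast
    qed
  qed
qed



lemma mem_split: "p \<in> {(x, y). P x y} \<longleftrightarrow> P (fst p) (snd p)"
  by (cases p) simp

lemma chain_fwd:
  assumes g: "gridok V X Y" and ch: "sechain {(x, y). Mc V x y} X Y (Suc j)"
  shows "sechain {(x, y). Ph V x y} X Y j"
proof -
  obtain c where c1: "\<forall>i<Suc j. c i \<in> {(x, y). Mc V x y} \<and> fst (c i) < X \<and> snd (c i) < Y"
    and c2: "\<forall>i. Suc i < Suc j \<longrightarrow> fst (c i) < fst (c (Suc i)) \<and> snd (c (Suc i)) < snd (c i)"
    using ch unfolding sechain_def by blast
  have "\<forall>i. \<exists>p. i < j \<longrightarrow> fst (c i) < fst p \<and> fst p \<le> fst (c (Suc i)) \<and>
      snd (c (Suc i)) < snd p \<and> snd p \<le> snd (c i) \<and> Ph V (fst p) (snd p)"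
  proof
    fix i
    show "\<exists>p. i < j \<longrightarrow> fst (c i) < fst p \<and> fst p \<le> fst (c (Suc i)) \<and>
      snd (c (Suc i)) < snd p \<and> snd p \<le> snd (c i) \<and> Ph V (fst p) (snd p)"
    proof (cases "i < j")
      case True
      have a: "Mc V (fst (c i)) (snd (c i))" using c1 True by (simp add: case_prod_beta)
      have b: "Mc V (fst (c (Suc i))) (snd (c (Suc i)))" using c1 True by (simp add: case_prod_beta)
      have o: "fst (c i) < fst (c (Suc i))" "snd (c (Suc i)) < snd (c i)" using c2 True by auto
      have o2: "fst (c (Suc i)) < X" "snd (c i) < Y" using c1 True by auto
      obtain x y where "fst (c i) < x \<and> x \<le> fst (c (Suc i)) \<and> snd (c (Suc i)) < y \<and> y \<le> snd (c i) \<and> Ph V x y"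
        using box1[OF g a b o o2] by blast
      then show ?thesis by (intro exI[of _ "(x, y)"]) simp
    next
      case False then show ?thesis by simp
    qed
  qed
  then obtain e where e: "\<forall>i. i < j \<longrightarrow> fst (c i) < fst (e i) \<and> fst (e i) \<le> fst (c (Suc i)) \<and>
      snd (c (Suc i)) < snd (e i) \<and> snd (e i) \<le> snd (c i) \<and> Ph V (fst (e i)) (snd (e i))"
    by (metis choice)
  show ?thesis unfolding sechain_def
  proof (intro exI[of _ e] conjI allI impI)
    fix i assume i: "i < j"
    show "e i \<in> {(x, y). Ph V x y}" using e i by (simp add: case_prod_beta)
    show "fst (e i) < X" using e i c1 by (meson Suc_mono le_less_trans)
    show "snd (e i) < Y" using e i c1 by (meson le_less_trans less_SucI)
  next
    fix i assume i: "Suc i < j"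
    have "fst (e i) \<le> fst (c (Suc i))" "fst (c (Suc i)) < fst (e (Suc i))" using e i by auto
    then show "fst (e i) < fst (e (Suc i))" by simp
    have "snd (e (Suc i)) \<le> snd (c (Suc i))" "snd (c (Suc i)) < snd (e i)" using e i by auto
    then show "snd (e (Suc i)) < snd (e i)" by simp
  qed
qed

lemma chain_bwd:
  assumes g: "gridok V X Y" and j: "1 \<le> j" and ch: "sechain {(x, y). Ph V x y} X Y j"
  shows "sechain {(x, y). Mc V x y} X Y (Suc j)"
proof -
  obtain c where c1: "\<forall>i<j. c i \<in> {(x, y). Ph V x y} \<and> fst (c i) < X \<and> snd (c i) < Y"
    and c2: "\<forall>i. Suc i < j \<longrightarrow> fst (c i) < fst (c (Suc i)) \<and> snd (c (Suc i)) < snd (c i)"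
    using ch unfolding sechain_def by blast
  have P: "Ph V (fst (c i)) (snd (c i))" "fst (c i) < X" "snd (c i) < Y" if "i < j" for i
    using c1 that by (auto simp add: case_prod_beta)
  obtain a where a: "a < fst (c 0)" "Mc V a (snd (c 0))"
  proof -
    have j0: "0 < j" using j by simp
    have U: "V (fst (c 0), snd (c 0)) < V (fst (c 0), Suc (snd (c 0)))" using P(1)[OF j0] unfolding Ph_def by simp
    have "fst (c 0) \<le> X" using P(2)[OF j0] by simp
    then obtain u where "u < fst (c 0)" "Mc V u (snd (c 0))" using row_wit[OF g P(3)[OF j0] _ U] by blast
    then show ?thesis by (rule that)
  qed
  obtain v where v: "v < snd (c (j - 1))" "Mc V (fst (c (j - 1))) v"
  proof -
    have j0: "j - 1 < j" using j by simp
    have R: "V (fst (c (j-1)), snd (c (j-1))) < V (Suc (fst (c (j-1))), snd (c (j-1)))"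
      using P(1)[OF j0] unfolding Ph_def by simp
    have "snd (c (j-1)) \<le> Y" using P(3)[OF j0] by simp
    then obtain w where "w < snd (c (j-1))" "Mc V (fst (c (j - 1))) w" using col_wit[OF g P(2)[OF j0] _ R] by blast
    then show ?thesis by (rule that)
  qed
  have "\<forall>i. \<exists>p. Suc i < j \<longrightarrow> fst (c i) \<le> fst p \<and> fst p < fst (c (Suc i)) \<and>
      snd (c (Suc i)) \<le> snd p \<and> snd p < snd (c i) \<and> Mc V (fst p) (snd p)"
  proof
    fix i
    show "\<exists>p. Suc i < j \<longrightarrow> fst (c i) \<le> fst p \<and> fst p < fst (c (Suc i)) \<and>
      snd (c (Suc i)) \<le> snd p \<and> snd p < snd (c i) \<and> Mc V (fst p) (snd p)"
    proof (cases "Suc i < j")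
      case True
      have o: "fst (c i) < fst (c (Suc i))" "snd (c (Suc i)) < snd (c i)" using c2 True by auto
      obtain u w where "fst (c i) \<le> u \<and> u < fst (c (Suc i)) \<and> snd (c (Suc i)) \<le> w \<and> w < snd (c i) \<and> Mc V u w"
        using box2[OF g P(1)[of i] P(1)[of "Suc i"] o P(2)[of "Suc i"] P(3)[of i]] True by fastforce
      then show ?thesis by (intro exI[of _ "(u, w)"]) simp
    next
      case False then show ?thesis by simp
    qed
  qed
  then obtain B where B: "\<forall>i. Suc i < j \<longrightarrow> fst (c i) \<le> fst (B i) \<and> fst (B i) < fst (c (Suc i)) \<and>
      snd (c (Suc i)) \<le> snd (B i) \<and> snd (B i) < snd (c i) \<and> Mc V (fst (B i)) (snd (B i))"
    by (metis choice)
  define e where "e i = (if i = 0 then (a, snd (c 0)) else if i < j then B (i - 1) else (fst (c (j - 1)), v))" for i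
  show ?thesis unfolding sechain_def
  proof (intro exI[of _ e] conjI allI impI)
    fix i assume i: "i < Suc j"
    consider "i = 0" | "0 < i" "i < j" | "i = j" using i by linarith
    then have "Mc V (fst (e i)) (snd (e i)) \<and> fst (e i) < X \<and> snd (e i) < Y"
    proof cases
      case 1 then show ?thesis using a P[of 0] j by (auto simp: e_def)
    next
      case 2
      then have sj: "Suc (i - 1) < j" by simp
      have Bi: "fst (B (i-1)) < fst (c (Suc (i-1)))" "snd (B (i-1)) < snd (c (i-1))"
        "Mc V (fst (B (i-1))) (snd (B (i-1)))" using B sj by auto
      have ei: "e i = B (i - 1)" using 2 by (simp add: e_def)
      have "Suc (i - 1) = i" using 2 by simp
      moreover have "snd (c (i-1)) < Y" using P(3)[of "i-1"] 2 by simp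
      ultimately show ?thesis using Bi ei P(2)[of i] 2 by auto
    next
      case 3
      then show ?thesis using v P[of "j-1"] j by (auto simp: e_def)
    qed
    then show "e i \<in> {(x, y). Mc V x y}" "fst (e i) < X" "snd (e i) < Y"
      by (auto simp add: case_prod_beta)
  next
    fix i assume i: "Suc i < Suc j"
    consider "i = 0" "1 < j" | "i = 0" "j = 1" | "0 < i" "Suc i < j" | "0 < i" "Suc i = j" using i j by linarith
    then have H: "fst (e i) < fst (e (Suc i)) \<and> snd (e (Suc i)) < snd (e i)"
    proof cases
      case 1
      then have "fst (c 0) \<le> fst (B 0)" "snd (B 0) < snd (c 0)" using B by auto
      then show ?thesis using 1 a by (auto simp: e_def)
    next
      case 2
      then show ?thesis using a v by (auto simp: e_def)
    next
      case 3
      have si: "Suc (i - 1) = i" using 3 by simp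
      have "Suc (i - 1) < j" using 3 by simp
      then have "fst (B (i-1)) < fst (c (Suc (i-1)))" "snd (c (Suc (i-1))) \<le> snd (B (i-1))" using B by auto
      then have b1: "fst (B (i-1)) < fst (c i)" "snd (c i) \<le> snd (B (i-1))" unfolding si .
      have b2: "fst (c i) \<le> fst (B i)" "snd (B i) < snd (c i)" using B 3 by auto
      show ?thesis using 3 b1 b2 by (auto simp: e_def)
    next
      case 4
      have si: "Suc (i - 1) = i" using 4 by simp
      have "Suc (i - 1) < j" using 4 by simp
      then have "fst (B (i-1)) < fst (c (Suc (i-1)))" "snd (c (Suc (i-1))) \<le> snd (B (i-1))" using B by auto
      then have b1: "fst (B (i-1)) < fst (c i)" "snd (c i) \<le> snd (B (i-1))" unfolding si .
      have "j - 1 = i" using 4 by simp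
      then show ?thesis using 4 b1 v by (auto simp: e_def)
    qed
    then show "fst (e i) < fst (e (Suc i))" "snd (e (Suc i)) < snd (e i)" by auto
  qed
qed



definition rect_ok :: "nat \<Rightarrow> (nat \<times> nat \<Rightarrow> nat) \<Rightarrow> (nat \<times> nat \<Rightarrow> nat list) \<Rightarrow> nat \<Rightarrow> nat \<Rightarrow> bool" where
  "rect_ok d m P X Y \<longleftrightarrow>
     (\<forall>x y. x < X \<longrightarrow> y < Y \<longrightarrow> rule_eqs d (m (x, y)) (P (x, y)) (P (x, Suc y)) (P (Suc x, y)) (P (Suc x, Suc y))) \<and>
     (\<forall>x\<le>X. P (x, 0) = []) \<and> (\<forall>y\<le>Y. P (0, y) = [])"

definition VV :: "(nat \<times> nat \<Rightarrow> nat list) \<Rightarrow> nat \<Rightarrow> nat \<times> nat \<Rightarrow> nat" where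
  "VV P i = (\<lambda>p. part (P p) i)"

lemma rect_sub: "rect_ok d m P X Y \<Longrightarrow> X' \<le> X \<Longrightarrow> Y' \<le> Y \<Longrightarrow> rect_ok d m P X' Y'"
  unfolding rect_ok_def by auto

lemma rect_cell: "rect_ok d m P X Y \<Longrightarrow> x < X \<Longrightarrow> y < Y \<Longrightarrow>
   rule_eqs d (m (x, y)) (P (x, y)) (P (x, Suc y)) (P (Suc x, y)) (P (Suc x, Suc y))"
  unfolding rect_ok_def by blast

lemma rect_grid:
  assumes r: "rect_ok d m P X Y" and i: "1 \<le> i"
  shows "gridok (VV P i) X Y"
  unfolding gridok_def
proof (intro conjI allI impI)
  fix x y assume xy: "x < X" "y \<le> Y"
  show "VV P i (x, y) \<le> VV P i (Suc x, y)"
  proof (cases "y < Y")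
    case True
    then have "interlaces (P (x, y)) (P (Suc x, y))" using rect_cell[OF r xy(1) True] by (simp add: rule_eqs_def)
    then show ?thesis using interl_D1[OF _ i] by (simp add: VV_def)
  next
    case False
    show ?thesis
    proof (cases Y)
      case 0
      then show ?thesis using r xy unfolding rect_ok_def by (simp add: VV_def)
    next
      case (Suc Y0)
      then have "y = Suc Y0" using False xy by simp
      then have "interlaces (P (x, y)) (P (Suc x, y))" using rect_cell[OF r xy(1), of Y0] Suc by (simp add: rule_eqs_def)
      then show ?thesis using interl_D1[OF _ i] by (simp add: VV_def)
    qed
  qed
next
  fix x y assume xy: "x \<le> X" "y < Y"
  show "VV P i (x, y) \<le> VV P i (x, Suc y)"
  proof (cases "x < X")
    case True
    then have "interlaces (P (x, y)) (P (x, Suc y))" using rect_cell[OF r True xy(2)] by (simp add: rule_eqs_def)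
    then show ?thesis using interl_D1[OF _ i] by (simp add: VV_def)
  next
    case False
    show ?thesis
    proof (cases X)
      case 0
      then show ?thesis using r xy unfolding rect_ok_def by (simp add: VV_def)
    next
      case (Suc X0)
      then have "x = Suc X0" using False xy by simp
      then have "interlaces (P (x, y)) (P (x, Suc y))" using rect_cell[OF r _ xy(2), of X0] Suc by (simp add: rule_eqs_def)
      then show ?thesis using interl_D1[OF _ i] by (simp add: VV_def)
    qed
  qed
next
  fix y :: nat assume "y \<le> Y" then show "VV P i (0, y) = 0" using r unfolding rect_ok_def by (simp add: VV_def)
next
  fix x :: nat assume "x \<le> X" then show "VV P i (x, 0) = 0" using r unfolding rect_ok_def by (simp add: VV_def)
qed

lemma rel_step:
  assumes r: "rect_ok d m P X Y" and xy: "x < X" "y < Y" and i: "1 \<le> i" "i < d"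
  shows "Mc (VV P (Suc i)) x y \<longleftrightarrow> Ph (VV P i) x y"
proof -
  have R: "rule_eqs d (m (x, y)) (P (x, y)) (P (x, Suc y)) (P (Suc x, y)) (P (Suc x, Suc y))"
    by (rule rect_cell[OF r xy])
  have "Suc i \<in> {2..d}" using i by simp
  then have "part (P (Suc x, Suc y)) (Suc i) + part (P (x, y)) i =
      min (part (P (x, Suc y)) i) (part (P (Suc x, y)) i) + max (part (P (x, Suc y)) (Suc i)) (part (P (Suc x, y)) (Suc i))"
    using R unfolding rule_eqs_def by (metis diff_Suc_1)
  then show ?thesis unfolding Mc_def Ph_def VV_def by (auto simp: min_def max_def split: if_splits)
qed

lemma rel_one:
  assumes r: "rect_ok d m P X Y" and xy: "x < X" "y < Y" and d: "1 \<le> d"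
  shows "Mc (VV P 1) x y \<longleftrightarrow> (0 < m (x, y) \<or> Ph (VV P d) x y)"
proof -
  have R: "rule_eqs d (m (x, y)) (P (x, y)) (P (x, Suc y)) (P (Suc x, y)) (P (Suc x, Suc y))"
    by (rule rect_cell[OF r xy])
  have e: "part (P (Suc x, Suc y)) 1 + part (P (x, y)) d = m (x, y) + min (part (P (x, Suc y)) d) (part (P (Suc x, y)) d) +
     max (part (P (x, Suc y)) 1) (part (P (Suc x, y)) 1)"
    using R unfolding rule_eqs_def by blast
  have k1: "part (P (x, y)) d \<le> part (P (x, Suc y)) d" "part (P (x, y)) d \<le> part (P (Suc x, y)) d"
    using R interl_D1[OF _ d] unfolding rule_eqs_def by blast+
  show ?thesis unfolding Mc_def Ph_def VV_def using e k1 by (auto simp: min_def max_def split: if_splits)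
qed

lemma chain_to_pos:
  assumes d: "1 \<le> d" and r: "rect_ok d m P X Y" and ch: "sechain {c. 0 < m c} X Y d"
  shows "0 < part (P (X, Y)) d"
proof -
  have main: "n < d \<Longrightarrow> sechain {(x, y). Mc (VV P (Suc n)) x y} X Y (d - n)" for n
  proof (induction n)
    case 0
    have "sechain {(x, y). Mc (VV P (Suc 0)) x y} X Y d" using ch
    proof (rule sechain_mono)
      fix x y assume "x < X" "y < Y" "(x, y) \<in> {c. 0 < m c}"
      then show "(x, y) \<in> {(x, y). Mc (VV P (Suc 0)) x y}" using rel_one[OF r _ _ d] by simp
    qed
    then show ?case by simp
  next
    case (Suc n)
    have "sechain {(x, y). Mc (VV P (Suc n)) x y} X Y (Suc (d - Suc n))"
      using Suc by (metis Suc_diff_Suc Suc_lessD)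
    then have "sechain {(x, y). Ph (VV P (Suc n)) x y} X Y (d - Suc n)"
      using chain_fwd[OF rect_grid[OF r]] by simp
    then show ?case
    proof (rule sechain_mono)
      fix x y assume "x < X" "y < Y" "(x, y) \<in> {(x, y). Ph (VV P (Suc n)) x y}"
      then show "(x, y) \<in> {(x, y). Mc (VV P (Suc (Suc n))) x y}" using rel_step[OF r _ _ _ Suc.prems] by simp
    qed
  qed
  have "sechain {(x, y). Mc (VV P d) x y} X Y 1" using main[of "d - 1"] d by simp
  then obtain c :: "nat \<Rightarrow> nat \<times> nat" where
    c: "\<forall>i<1. c i \<in> {(x, y). Mc (VV P d) x y} \<and> fst (c i) < X \<and> snd (c i) < Y"
    unfolding sechain_def by blast
  then have "c 0 \<in> {(x, y). Mc (VV P d) x y}" "fst (c 0) < X" "snd (c 0) < Y"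
    by auto
  then have "0 < VV P d (X, Y)" using wit_pos[OF rect_grid[OF r d]] by (auto simp: case_prod_beta)
  then show ?thesis by (simp add: VV_def)
qed

lemma pos_to_chain:
  assumes d: "1 \<le> d"
  shows "rect_ok d m P X Y \<Longrightarrow> 0 < part (P (X, Y)) d \<Longrightarrow> sechain {c. 0 < m c} X Y d"
proof (induction "X + Y" arbitrary: X Y rule: less_induct)
  case less
  note r = less.prems(1)
  obtain x0 y0 where xy0: "x0 < X" "y0 < Y" "Mc (VV P d) x0 y0"
    using pos_wit[OF rect_grid[OF r d]] less.prems(2) by (auto simp: VV_def)
  have main: "n < d \<Longrightarrow> sechain {(x, y). Mc (VV P (d - n)) x y} X Y (Suc n)" for n
  proof (induction n)
    case 0
    show ?case unfolding sechain_def
      by (rule exI[of _ "\<lambda>_. (x0, y0)"]) (simp add: xy0)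
  next
    case (Suc n)
    let ?i = "d - Suc n"
    have i: "1 \<le> ?i" "?i < d" using Suc.prems by auto
    have si: "Suc ?i = d - n" using Suc.prems by simp
    have "sechain {(x, y). Mc (VV P (d - n)) x y} X Y (Suc n)" using Suc by simp
    then have "sechain {(x, y). Ph (VV P ?i) x y} X Y (Suc n)"
    proof (rule sechain_mono)
      fix x y assume "x < X" "y < Y" "(x, y) \<in> {(x, y). Mc (VV P (d - n)) x y}"
      then show "(x, y) \<in> {(x, y). Ph (VV P ?i) x y}" using rel_step[OF r _ _ i] si by simp
    qed
    then show ?case using chain_bwd[OF rect_grid[OF r i(1)]] by simp
  qed
  have "sechain {(x, y). Mc (VV P 1) x y} X Y d" using main[of "d - 1"] d by simp
  then obtain c where c1: "\<forall>i<d. c i \<in> {(x, y). Mc (VV P 1) x y} \<and> fst (c i) < X \<and> snd (c i) < Y"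
    and c2: "\<forall>i. Suc i < d \<longrightarrow> fst (c i) < fst (c (Suc i)) \<and> snd (c (Suc i)) < snd (c i)"
    unfolding sechain_def by blast
  show ?case
  proof (cases "\<forall>i<d. 0 < m (c i)")
    case True
    show ?thesis unfolding sechain_def using True c1 c2 by (intro exI[of _ c]) auto
  next
    case False
    then obtain i where i: "i < d" "m (c i) = 0" by auto
    let ?x = "fst (c i)" and ?y = "snd (c i)"
    have b: "?x < X" "?y < Y" using c1 i by auto
    have "Mc (VV P 1) ?x ?y" using c1 i by (auto simp: case_prod_beta)
    then have "Ph (VV P d) ?x ?y" using rel_one[OF r b d] i by simp
    then have "0 < part (P (?x, Suc ?y)) d" unfolding Ph_def VV_def by simp
    moreover have "rect_ok d m P ?x (Suc ?y)" using rect_sub[OF r] b by simp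
    moreover have "?x + Suc ?y < X + Y" using b by simp
    ultimately have "sechain {c. 0 < m c} ?x (Suc ?y) d" using less.hyps by blast
    then show ?thesis using sechain_shrink b by (metis Suc_leI less_imp_le)
  qed
qed

lemma chain_inv:
  assumes "1 \<le> d" "rect_ok d m P X Y"
  shows "0 < part (P (X, Y)) d \<longleftrightarrow> sechain {c. 0 < m c} X Y d"
  using chain_to_pos[OF assms] pos_to_chain[OF assms(1) assms(2)] by blast



lemma F_sorted: "is_partition F \<Longrightarrow> i \<le> j \<Longrightarrow> j < length F \<Longrightarrow> F ! j \<le> F ! i"
proof -
  assume h: "is_partition F" "i \<le> j" "j < length F"
  show ?thesis
  proof (cases "i = j")
    case True then show ?thesis by simp
  next
    case False
    then have "i < j" using h by simp
    then show ?thesis using sorted_wrt_nth_less[of "(\<ge>)" F i j] h unfolding is_partition_def by simp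
  qed
qed

lemma F_pos: "is_partition F \<Longrightarrow> i < length F \<Longrightarrow> 0 < F ! i"
proof -
  assume h: "is_partition F" "i < length F"
  have "F ! i \<in> set F" using h by simp
  then have "F ! i \<noteq> 0" using h(1) unfolding is_partition_def by metis
  then show ?thesis by simp
qed

lemma hd_F: "F \<noteq> [] \<Longrightarrow> hd F = F ! 0" by (simp add: hd_conv_nth)

lemma cell_down: "is_partition F \<Longrightarrow> cell F (x, y) \<Longrightarrow> x' \<le> x \<Longrightarrow> y' \<le> y \<Longrightarrow> cell F (x', y')"
  unfolding cell_def using F_sorted[of F y' y] by fastforce

lemma cell_lattice: "cell F (x, y) \<Longrightarrow> lattice_point F (x, y) \<and> lattice_point F (Suc x, y) \<and>
   lattice_point F (x, Suc y) \<and> lattice_point F (Suc x, Suc y)"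
  unfolding lattice_point_def by auto

lemma lattice_cell_ne: "is_partition F \<Longrightarrow> lattice_point F (Suc x, Suc y) \<Longrightarrow> cell F (x, y)"
proof -
  assume F: "is_partition F" and l: "lattice_point F (Suc x, Suc y)"
  then obtain a b where ab: "cell F (a, b)" "Suc x \<in> {a, Suc a}" "Suc y \<in> {b, Suc b}"
    unfolding lattice_point_def by auto
  then show ?thesis using cell_down[OF F ab(1), of x y] by auto
qed

lemma lattice_bounds:
  assumes F: "is_partition F" "F \<noteq> []" and l: "lattice_point F (x, y)"
  shows "y \<le> length F" "x \<le> hd F" "1 \<le> y \<Longrightarrow> x \<le> F ! (y - 1)"
proof -
  obtain a b where ab: "cell F (a, b)" "x \<in> {a, Suc a}" "y \<in> {b, Suc b}"
    using l unfolding lattice_point_def by auto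
  have b: "b < length F" "a < F ! b" using ab unfolding cell_def by auto
  show "y \<le> length F" using ab b by auto
  have "F ! b \<le> F ! 0" using F_sorted[OF F(1), of 0 b] b by simp
  then show "x \<le> hd F" using ab b hd_F[OF F(2)] by auto
  assume y: "1 \<le> y"
  have "F ! b \<le> F ! (y - 1)" using F_sorted[OF F(1), of "y-1" b] ab b y by auto
  then show "x \<le> F ! (y - 1)" using ab b by auto
qed

definition Bp :: "nat list \<Rightarrow> nat \<times> nat \<Rightarrow> bool" where
  "Bp F p \<longleftrightarrow> snd p \<le> length F \<and> fst p \<le> hd F \<and> (snd p < length F \<longrightarrow> F ! snd p \<le> fst p) \<and>
     (1 \<le> snd p \<longrightarrow> fst p \<le> F ! (snd p - 1))"

lemma bpt_inv:
  assumes F: "is_partition F" "F \<noteq> []"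
  shows "i \<le> boundary_len F \<Longrightarrow> Bp F (bpt F i) \<and> fst (bpt F i) + i = hd F + snd (bpt F i)"
proof (induction i)
  case 0
  then show ?case using F hd_F[OF F(2)] F_pos[OF F(1), of 0] by (simp add: Bp_def)
next
  case (Suc i)
  obtain x y where xy: "bpt F i = (x, y)" by fastforce
  have IH: "Bp F (x, y)" "x + i = hd F + y" using Suc xy by auto
  show ?case
  proof (cases "step_up F (x, y)")
    case True
    then have st: "y < length F" "F ! y = x" by (auto simp: step_up_def)
    have e: "bpt F (Suc i) = (x, Suc y)" using True xy by (simp add: bstep_def)
    have "Suc y < length F \<Longrightarrow> F ! Suc y \<le> x" using F_sorted[OF F(1), of y "Suc y"] st by simp
    then show ?thesis using IH st e unfolding Bp_def by auto
  next
    case False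
    have e: "bpt F (Suc i) = (x - 1, y)" using False xy by (simp add: bstep_def)
    have x1: "1 \<le> x"
    proof (cases "y < length F")
      case True
      then have "F ! y < x" using IH False unfolding Bp_def step_up_def by auto
      then show ?thesis by simp
    next
      case False
      then have "y = length F" using IH unfolding Bp_def by simp
      then show ?thesis using IH Suc.prems unfolding boundary_len_def by simp
    qed
    have "y < length F \<Longrightarrow> F ! y < x" using IH False unfolding Bp_def step_up_def by auto
    then show ?thesis using IH e x1 unfolding Bp_def by auto
  qed
qed

lemma Bp_lattice:
  assumes F: "is_partition F" "F \<noteq> []" and B: "Bp F (x, y)"
  shows "lattice_point F (x, y)" "\<not> cell F (x, y)"
proof -
  show "\<not> cell F (x, y)" using B unfolding Bp_def cell_def by auto
  show "lattice_point F (x, y)"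
  proof (cases "y = 0")
    case True
    have h: "0 < hd F" using F_pos[OF F(1), of 0] F hd_F[OF F(2)] by simp
    show ?thesis
    proof (cases x)
      case 0
      then have "cell F (0, 0)" using h F True hd_F[OF F(2)] unfolding cell_def by simp
      then show ?thesis using 0 True unfolding lattice_point_def by fastforce
    next
      case (Suc x0)
      then have "cell F (x0, 0)" using B F True hd_F[OF F(2)] unfolding cell_def Bp_def by simp
      then show ?thesis using Suc True unfolding lattice_point_def by fastforce
    qed
  next
    case False
    then have y: "1 \<le> y" "y - 1 < length F" using B unfolding Bp_def by auto
    show ?thesis
    proof (cases x)
      case 0
      then have "cell F (0, y - 1)" using F_pos[OF F(1) y(2)] y unfolding cell_def by simp
      then show ?thesis using 0 y unfolding lattice_point_def by (intro exI[of _ 0] exI[of _ "y-1"]) auto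
    next
      case (Suc x0)
      then have "cell F (x0, y - 1)" using B y unfolding cell_def Bp_def by simp
      then show ?thesis using Suc y unfolding lattice_point_def by (intro exI[of _ x0] exI[of _ "y-1"]) auto
    qed
  qed
qed

lemma lattice_Bp:
  assumes F: "is_partition F" "F \<noteq> []" and l: "lattice_point F (x, y)" and nc: "\<not> cell F (x, y)"
  shows "Bp F (x, y)"
  using lattice_bounds[OF F l] nc unfolding Bp_def cell_def by auto

lemma Bp_unique:
  assumes F: "is_partition F" and B1: "Bp F (x, y)" and B2: "Bp F (x', y')" and e: "x + y' = x' + y"
  shows "x = x' \<and> y = y'"
proof -
  have "\<not> y < y'" if B1: "Bp F (x, y)" and B2: "Bp F (x', y')" and e: "x + y' = x' + y" for x y x' y'
  proof
    assume yy: "y < y'"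
    then have xx: "x < x'" using e by simp
    have "y < length F" using yy B2 unfolding Bp_def by simp
    then have a: "F ! y \<le> x" using B1 unfolding Bp_def by simp
    have "x' \<le> F ! (y' - 1)" using B2 yy unfolding Bp_def by simp
    moreover have "y \<le> y' - 1" "y' - 1 < length F" using yy B2 unfolding Bp_def by auto
    then have "F ! (y' - 1) \<le> F ! y" using F_sorted[OF F, of y "y'-1"] by simp
    ultimately show False using a xx by simp
  qed
  from this[OF B1 B2 e] this[OF B2 B1] e show ?thesis by simp
qed

lemma boundary_point:
  assumes F: "is_partition F" "F \<noteq> []" and l: "lattice_point F (x, y)" and nc: "\<not> cell F (x, y)"
  shows "hd F + y - x \<le> boundary_len F" "bpt F (hd F + y - x) = (x, y)"
proof -
  have B: "Bp F (x, y)" by (rule lattice_Bp[OF F l nc])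
  have "y \<le> length F" using B unfolding Bp_def by simp
  then show le: "hd F + y - x \<le> boundary_len F" unfolding boundary_len_def by linarith
  obtain x' y' where xy': "bpt F (hd F + y - x) = (x', y')" by fastforce
  have I: "Bp F (x', y')" "x' + (hd F + y - x) = hd F + y'" using bpt_inv[OF F le] xy' by auto
  have "x \<le> hd F" using B unfolding Bp_def by simp
  then have "x + y' = x' + y" using I(2) by linarith
  then have "x = x' \<and> y = y'" using Bp_unique[OF F(1) B I(1)] by simp
  then show "bpt F (hd F + y - x) = (x, y)" using xy' by simp
qed

lemma bpt_lattice:
  assumes F: "is_partition F" "F \<noteq> []" and i: "i \<le> boundary_len F"
  shows "lattice_point F (bpt F i)" "\<not> cell F (bpt F i)"
  using Bp_lattice[OF F, of "fst (bpt F i)" "snd (bpt F i)"] bpt_inv[OF F i] by auto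

lemma bpt_step:
  assumes F: "is_partition F" "F \<noteq> []" and i: "i < boundary_len F" and xy: "bpt F i = (x, y)"
  shows "step_up F (x, y) \<Longrightarrow> bpt F (Suc i) = (x, Suc y) \<and> 1 \<le> x \<and> cell F (x - 1, y)"
    and "\<not> step_up F (x, y) \<Longrightarrow> bpt F (Suc i) = (x - 1, y) \<and> 1 \<le> x \<and> 1 \<le> y \<and> cell F (x - 1, y - 1)"
proof -
  have I: "Bp F (x, y)" "x + i = hd F + y" using bpt_inv[OF F, of i] i xy by auto
  have I2: "Bp F (bpt F (Suc i))" using bpt_inv[OF F, of "Suc i"] i by simp
  assume "step_up F (x, y)"
  then have st: "y < length F" "F ! y = x" by (auto simp: step_up_def)
  have "0 < x" using F_pos[OF F(1) st(1)] st by simp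
  then show "bpt F (Suc i) = (x, Suc y) \<and> 1 \<le> x \<and> cell F (x - 1, y)"
    using \<open>step_up F (x, y)\<close> xy st by (simp add: bstep_def cell_def)
next
  have I: "Bp F (x, y)" "x + i = hd F + y" using bpt_inv[OF F, of i] i xy by auto
  have I2: "Bp F (bpt F (Suc i))" "fst (bpt F (Suc i)) + Suc i = hd F + snd (bpt F (Suc i))"
    using bpt_inv[OF F, of "Suc i"] i by auto
  assume ns: "\<not> step_up F (x, y)"
  have e: "bpt F (Suc i) = (x - 1, y)" using ns xy by (simp add: bstep_def)
  have x1: "1 \<le> x" using I2 e I by simp
  have y1: "1 \<le> y"
  proof (rule ccontr)
    assume "\<not> 1 \<le> y"
    then have "y = 0" by simp
    then have "F ! 0 \<le> x" "x \<le> F ! 0" using I F hd_F[OF F(2)] unfolding Bp_def by auto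
    then show False using ns \<open>y = 0\<close> F unfolding step_up_def by simp
  qed
  have "cell F (x - 1, y - 1)" using I x1 y1 unfolding Bp_def cell_def by auto
  then show "bpt F (Suc i) = (x - 1, y) \<and> 1 \<le> x \<and> 1 \<le> y \<and> cell F (x - 1, y - 1)" using e x1 y1 by simp
qed

lemma type_seq_nth: "i < boundary_len F \<Longrightarrow> type_seq F ! i = step_up F (bpt F i)"
  unfolding type_seq_def by simp

lemma length_type_seq: "length (type_seq F) = boundary_len F"
  unfolding type_seq_def by simp



lemma pattern_to_chain:
  assumes "contains_pattern d F m"
  shows "\<exists>X Y. cell F (X, Y) \<and> m (X, Y) \<noteq> 0 \<and> sechain {c. 0 < m c} X Y d"
proof -
  obtain c where c1: "\<forall>i\<in>{1..Suc d}. cell F (c i) \<and> m (c i) \<noteq> 0"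
    and c2: "\<forall>i\<in>{1..<d}. fst (c i) < fst (c (Suc i)) \<and> snd (c (Suc i)) < snd (c i)"
    and c3: "\<forall>i\<in>{1..d}. fst (c i) < fst (c (Suc d)) \<and> snd (c i) < snd (c (Suc d))"
    using assms unfolding contains_pattern_def by blast
  obtain X Y where XY: "c (Suc d) = (X, Y)" by fastforce
  have "cell F (X, Y)" "m (X, Y) \<noteq> 0" using c1 XY by (metis atLeastAtMost_iff le_add1 le_refl plus_1_eq_Suc)+
  moreover have "sechain {c. 0 < m c} X Y d" unfolding sechain_def
  proof (intro exI[of _ "\<lambda>i. c (Suc i)"] conjI allI impI)
    fix i assume i: "i < d"
    then have "Suc i \<in> {1..Suc d}" "Suc i \<in> {1..d}" by auto
    then show "c (Suc i) \<in> {c. 0 < m c}" "fst (c (Suc i)) < X" "snd (c (Suc i)) < Y"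
      using c1 c3 XY by auto
  next
    fix i assume i: "Suc i < d"
    then have "Suc i \<in> {1..<d}" by auto
    then show "fst (c (Suc i)) < fst (c (Suc (Suc i)))" "snd (c (Suc (Suc i))) < snd (c (Suc i))"
      using c2 by auto
  qed
  ultimately show ?thesis by blast
qed

lemma chain_to_pattern:
  assumes F: "is_partition F" and XY: "cell F (X, Y)" "m (X, Y) \<noteq> 0" and ch: "sechain {c. 0 < m c} X Y d"
  shows "contains_pattern d F m"
proof -
  obtain c where c1: "\<forall>i<d. c i \<in> {c. 0 < m c} \<and> fst (c i) < X \<and> snd (c i) < Y"
    and c2: "\<forall>i. Suc i < d \<longrightarrow> fst (c i) < fst (c (Suc i)) \<and> snd (c (Suc i)) < snd (c i)"
    using ch unfolding sechain_def by blast
  define e where "e i = (if i = Suc d then (X, Y) else c (i - 1))" for i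
  have A: "\<forall>i\<in>{1..Suc d}. cell F (e i) \<and> m (e i) \<noteq> 0"
  proof
    fix i assume i: "i \<in> {1..Suc d}"
    show "cell F (e i) \<and> m (e i) \<noteq> 0"
    proof (cases "i = Suc d")
      case True then show ?thesis using XY by (simp add: e_def)
    next
      case False
      then have "i - 1 < d" using i by auto
      then have h: "0 < m (c (i - 1))" "fst (c (i-1)) < X" "snd (c (i-1)) < Y" using c1 by auto
      have "cell F (fst (c (i-1)), snd (c (i-1)))" by (rule cell_down[OF F XY(1)]) (use h in simp)+
      then have "cell F (c (i-1))" by simp
      then show ?thesis using False h by (simp add: e_def)
    qed
  qed
  have B: "\<forall>i\<in>{1..<d}. fst (e i) < fst (e (Suc i)) \<and> snd (e (Suc i)) < snd (e i)"
  proof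
    fix i assume i: "i \<in> {1..<d}"
    then have s: "Suc (i - 1) < d" "Suc (i - 1) = i" by auto
    then have "fst (c (i-1)) < fst (c i) \<and> snd (c i) < snd (c (i-1))" using c2 by metis
    then show "fst (e i) < fst (e (Suc i)) \<and> snd (e (Suc i)) < snd (e i)"
      using i by (auto simp: e_def)
  qed
  have C: "\<forall>i\<in>{1..d}. fst (e i) < fst (e (Suc d)) \<and> snd (e i) < snd (e (Suc d))"
  proof
    fix i assume i: "i \<in> {1..d}"
    then have "i - 1 < d" by auto
    then show "fst (e i) < fst (e (Suc d)) \<and> snd (e i) < snd (e (Suc d))"
      using c1 i by (auto simp: e_def)
  qed
  show ?thesis unfolding contains_pattern_def using A B C by blast
qed

lemma growth_rule: "growth_diagram d F m P \<Longrightarrow> cell F (x, y) \<Longrightarrow>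
   rsk_local_rule d (m (x, y)) (P (x, y)) (P (x, Suc y)) (P (Suc x, y)) (P (Suc x, Suc y))"
  unfolding growth_diagram_def by blast

lemma growth_axis: "growth_diagram d F m P \<Longrightarrow> lattice_point F p \<Longrightarrow> fst p = 0 \<or> snd p = 0 \<Longrightarrow> P p = []"
  unfolding growth_diagram_def by blast

lemma growth_dpart:
  assumes g: "growth_diagram d F m P" and l: "lattice_point F p"
  shows "d_partition d (P p)"
proof -
  obtain a b where ab: "cell F (a, b)" "fst p \<in> {a, Suc a}" "snd p \<in> {b, Suc b}"
    using l unfolding lattice_point_def by auto
  have "rsk_local_rule d (m (a, b)) (P (a, b)) (P (a, Suc b)) (P (Suc a, b)) (P (Suc a, Suc b))"
    by (rule growth_rule[OF g ab(1)])
  then show ?thesis using ab unfolding rsk_local_rule_def by (cases p) auto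
qed

lemma growth_rect:
  assumes F: "is_partition F" and g: "growth_diagram d F m P" and XY: "cell F (X, Y)"
  shows "rect_ok d m P X Y"
  unfolding rect_ok_def
proof (intro conjI allI impI)
  fix x y assume "x < X" "y < Y"
  then have "cell F (x, y)" using cell_down[OF F XY] by simp
  then show "rule_eqs d (m (x, y)) (P (x, y)) (P (x, Suc y)) (P (Suc x, y)) (P (Suc x, Suc y))"
    using growth_rule[OF g] rsk_rule_iff by blast
next
  fix x assume "x \<le> X"
  then have "cell F (x, 0)" using cell_down[OF F XY] by simp
  then show "P (x, 0) = []" using growth_axis[OF g] cell_lattice by simp
next
  fix y assume "y \<le> Y"
  then have "cell F (0, y)" using cell_down[OF F XY] by simp
  then show "P (0, y) = []" using growth_axis[OF g] cell_lattice by simp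
qed

theorem part_a2:
  assumes d: "1 \<le> d" and F: "is_partition F" and g: "growth_diagram d F m P"
  shows "avoids_pattern d F m"
  unfolding avoids_pattern_def
proof
  assume "contains_pattern d F m"
  then obtain X Y where XY: "cell F (X, Y)" "m (X, Y) \<noteq> 0" "sechain {c. 0 < m c} X Y d"
    using pattern_to_chain by blast
  have "0 < part (P (X, Y)) d" using chain_inv[OF d growth_rect[OF F g XY(1)]] XY(3) by simp
  moreover have "part (P (X, Y)) d = 0" using growth_rule[OF g XY(1)] XY(2) unfolding rsk_local_rule_def by simp
  ultimately show False by simp
qed

theorem part_a1:
  assumes d: "1 \<le> d" and F: "is_partition F" "F \<noteq> []" and g: "growth_diagram d F m P"
  shows "d_osc_tableau d (type_seq F) (\<lambda>i. P (bpt F i))"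
  unfolding d_osc_tableau_def length_type_seq
proof (intro conjI allI impI ballI)
  show "P (bpt F 0) = []" using growth_axis[OF g bpt_lattice(1)[OF F, of 0]] by simp
  obtain x y where xy: "bpt F (boundary_len F) = (x, y)" by fastforce
  have "Bp F (x, y)" "x + boundary_len F = hd F + y" using bpt_inv[OF F, of "boundary_len F"] xy by auto
  then have "x = 0" unfolding Bp_def boundary_len_def by simp
  then show "P (bpt F (boundary_len F)) = []" using growth_axis[OF g bpt_lattice(1)[OF F, of "boundary_len F"]] xy by simp
next
  fix i assume "i \<le> boundary_len F"
  then show "d_partition d (P (bpt F i))" using growth_dpart[OF g bpt_lattice(1)[OF F]] by simp
next
  fix i assume i: "i \<in> {1..boundary_len F}"
  let ?j = "i - 1"
  have j: "?j < boundary_len F" "Suc ?j = i" using i by auto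
  obtain x y where xy: "bpt F ?j = (x, y)" by fastforce
  have ts: "type_seq F ! ?j = step_up F (x, y)" using type_seq_nth[OF j(1)] xy by simp
  show "if type_seq F ! (i - 1) then interlaces (P (bpt F (i - 1))) (P (bpt F i))
         else interlaces (P (bpt F i)) (P (bpt F (i - 1)))"
  proof (cases "step_up F (x, y)")
    case True
    then have s: "bpt F i = (x, Suc y)" "1 \<le> x" "cell F (x - 1, y)" using bpt_step(1)[OF F j(1) xy] j by auto
    have "interlaces (P (Suc (x - 1), y)) (P (Suc (x - 1), Suc y))"
      using growth_rule[OF g s(3)] unfolding rsk_local_rule_def by simp
    then show ?thesis using ts True s xy by simp
  next
    case False
    then have s: "bpt F i = (x - 1, y)" "1 \<le> x" "1 \<le> y" "cell F (x - 1, y - 1)" using bpt_step(2)[OF F j(1) xy] j by auto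
    have "interlaces (P (x - 1, Suc (y - 1))) (P (Suc (x - 1), Suc (y - 1)))"
      using growth_rule[OF g s(4)] unfolding rsk_local_rule_def by simp
    then show ?thesis using ts False s xy by simp
  qed
qed

fun Pf :: "nat \<Rightarrow> (nat \<times> nat \<Rightarrow> nat) \<Rightarrow> nat \<Rightarrow> nat \<Rightarrow> nat list" where
  "Pf d m 0 y = []"
| "Pf d m (Suc x) 0 = []"
| "Pf d m (Suc x) (Suc y) = fwd d (m (x, y)) (Pf d m x y) (Pf d m x (Suc y)) (Pf d m (Suc x) y)"

lemma Pf_zero: "x = 0 \<or> y = 0 \<Longrightarrow> Pf d m x y = []"
  by (cases x; cases y) auto

lemma Pf_inv:
  assumes d: "1 \<le> d"
  shows "x + y \<le> s \<Longrightarrow> d_partition d (Pf d m x y) \<and>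
     (1 \<le> y \<longrightarrow> interlaces (Pf d m x (y - 1)) (Pf d m x y)) \<and>
     (1 \<le> x \<longrightarrow> interlaces (Pf d m (x - 1) y) (Pf d m x y))"
proof (induction s arbitrary: x y)
  have dn: "d_partition d []" by (simp add: d_partition_def is_partition_def)
  have inn: "interlaces [] []" by (simp add: interlaces_def)
  {
    case 0
    then show ?case using dn by (simp add: Pf_zero)
  next
    case (Suc s)
    show ?case
    proof (cases "x = 0 \<or> y = 0")
      case True
      then show ?thesis using dn inn by (auto simp: Pf_zero)
    next
      case False
      then obtain x0 y0 where xy: "x = Suc x0" "y = Suc y0" by (metis not0_implies_Suc)
      have I1: "d_partition d (Pf d m x0 y0)" using Suc.IH[of x0 y0] Suc.prems xy by simp
      have I2: "d_partition d (Pf d m x0 (Suc y0)) \<and> (1 \<le> x0 \<longrightarrow> interlaces (Pf d m (x0 - 1) (Suc y0)) (Pf d m x0 (Suc y0))) \<and>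
          (interlaces (Pf d m x0 y0) (Pf d m x0 (Suc y0)))"
        using Suc.IH[of x0 "Suc y0"] Suc.prems xy by simp
      have I3: "d_partition d (Pf d m (Suc x0) y0) \<and> (interlaces (Pf d m x0 y0) (Pf d m (Suc x0) y0))"
        using Suc.IH[of "Suc x0" y0] Suc.prems xy by simp
      have km: "interlaces (Pf d m x0 y0) (Pf d m x0 (Suc y0))" using I2 by blast
      have kn: "interlaces (Pf d m x0 y0) (Pf d m (Suc x0) y0)" using I3 by blast
      have R: "rule_eqs d (m (x0, y0)) (Pf d m x0 y0) (Pf d m x0 (Suc y0)) (Pf d m (Suc x0) y0)
          (fwd d (m (x0, y0)) (Pf d m x0 y0) (Pf d m x0 (Suc y0)) (Pf d m (Suc x0) y0))"
        using fwd_ok[OF d I1 _ _ km kn] I2 I3 by blast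
      then show ?thesis using xy unfolding rule_eqs_def by simp
    qed
  }
qed

lemma Pf_rule:
  assumes d: "1 \<le> d"
  shows "rule_eqs d (m (x, y)) (Pf d m x y) (Pf d m x (Suc y)) (Pf d m (Suc x) y) (Pf d m (Suc x) (Suc y))"
proof -
  have I1: "d_partition d (Pf d m x y)" using Pf_inv[OF d, of x y "x + y"] by simp
  have I2: "d_partition d (Pf d m x (Suc y))" "interlaces (Pf d m x y) (Pf d m x (Suc y))"
    using Pf_inv[OF d, of x "Suc y" "x + Suc y" m] by auto
  have I3: "d_partition d (Pf d m (Suc x) y)" "interlaces (Pf d m x y) (Pf d m (Suc x) y)"
    using Pf_inv[OF d, of "Suc x" y "Suc x + y" m] by auto
  show ?thesis using fwd_ok[OF d I1 I2(1) I3(1) I2(2) I3(2)] by simp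
qed

definition PF :: "nat \<Rightarrow> (nat \<times> nat \<Rightarrow> nat) \<Rightarrow> nat \<times> nat \<Rightarrow> nat list" where
  "PF d m p = Pf d m (fst p) (snd p)"

lemma PF_rect: "1 \<le> d \<Longrightarrow> rect_ok d m (PF d m) X Y"
  unfolding rect_ok_def PF_def using Pf_rule by (auto simp: Pf_zero)

theorem part_b_exists:
  assumes d: "1 \<le> d" and F: "is_partition F" and av: "avoids_pattern d F m"
  shows "growth_diagram d F m (PF d m)"
  unfolding growth_diagram_def
proof (intro conjI allI impI)
  fix p assume "lattice_point F p \<and> (fst p = 0 \<or> snd p = 0)"
  then show "PF d m p = []" unfolding PF_def by (simp add: Pf_zero)
next
  fix x y assume c: "cell F (x, y)"
  have R: "rule_eqs d (m (x, y)) (PF d m (x, y)) (PF d m (x, Suc y)) (PF d m (Suc x, y)) (PF d m (Suc x, Suc y))"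
    using Pf_rule[OF d] unfolding PF_def by simp
  have "m (x, y) = 0 \<or> part (PF d m (x, y)) d = 0"
  proof (rule ccontr)
    assume "\<not> (m (x, y) = 0 \<or> part (PF d m (x, y)) d = 0)"
    then have h: "m (x, y) \<noteq> 0" "0 < part (PF d m (x, y)) d" by auto
    then have "sechain {c. 0 < m c} x y d" using chain_inv[OF d PF_rect[OF d]] by blast
    then have "contains_pattern d F m" using chain_to_pattern[of F x y m d] F c h(1) by simp
    then show False using av unfolding avoids_pattern_def by simp
  qed
  then show "rsk_local_rule d (m (x, y)) (PF d m (x, y)) (PF d m (x, Suc y)) (PF d m (Suc x, y)) (PF d m (Suc x, Suc y))"
    using R rsk_rule_iff by blast
qed

theorem part_b_unique:
  assumes d: "1 \<le> d" and F: "is_partition F" and g: "growth_diagram d F m P'"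
  shows "lattice_point F (x, y) \<Longrightarrow> P' (x, y) = PF d m (x, y)"
proof (induction "x + y" arbitrary: x y rule: less_induct)
  case less
  show ?case
  proof (cases "x = 0 \<or> y = 0")
    case True
    then show ?thesis using growth_axis[OF g less.prems] unfolding PF_def by (auto simp: Pf_zero)
  next
    case False
    then obtain x0 y0 where xy: "x = Suc x0" "y = Suc y0" by (metis not0_implies_Suc)
    have c: "cell F (x0, y0)" using lattice_cell_ne[OF F] less.prems xy by simp
    have L: "lattice_point F (x0, y0)" "lattice_point F (x0, Suc y0)" "lattice_point F (Suc x0, y0)"
      using cell_lattice[OF c] by auto
    have e1: "P' (x0, y0) = PF d m (x0, y0)" using less.hyps[OF _ L(1)] xy by simp
    have e2: "P' (x0, Suc y0) = PF d m (x0, Suc y0)" using less.hyps[OF _ L(2)] xy by simp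
    have e3: "P' (Suc x0, y0) = PF d m (Suc x0, y0)" using less.hyps[OF _ L(3)] xy by simp
    have "rule_eqs d (m (x0, y0)) (P' (x0, y0)) (P' (x0, Suc y0)) (P' (Suc x0, y0)) (P' (Suc x0, Suc y0))"
      using growth_rule[OF g c] rsk_rule_iff by blast
    then have "P' (Suc x0, Suc y0) = fwd d (m (x0, y0)) (P' (x0, y0)) (P' (x0, Suc y0)) (P' (Suc x0, y0))"
      using fwd_unique[OF d] by blast
    then show ?thesis using xy e1 e2 e3 unfolding PF_def by simp
  qed
qed



function Qb :: "nat \<Rightarrow> nat list \<Rightarrow> (nat \<Rightarrow> nat list) \<Rightarrow> nat \<times> nat \<Rightarrow> nat list" where
  "Qb d F lam (x, y) = (if cell F (x, y)
     then bwdk d (Qb d F lam (x, Suc y)) (Qb d F lam (Suc x, y)) (Qb d F lam (Suc x, Suc y))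
     else lam (hd F + y - x))"
  by pat_completeness auto
termination
proof (relation "measure (\<lambda>(d, F, lam, p). sum_list F + length F - (fst p + snd p))")
  show "wf (measure (\<lambda>(d, F, lam, p). sum_list F + length F - (fst p + snd p)))" by simp
next
  fix d F lam x y assume c: "cell F (x, y)"
  then have "x < F ! y" "y < length F" unfolding cell_def by auto
  moreover have "F ! y \<le> sum_list F" using \<open>y < length F\<close> by (rule elem_le_sum_list)
  ultimately have "x + y + 2 \<le> sum_list F + length F" by linarith
  then show "((d, F, lam, x, Suc y), d, F, lam, x, y) \<in> measure (\<lambda>(d, F, lam, p). sum_list F + length F - (fst p + snd p))"
    "((d, F, lam, Suc x, y), d, F, lam, x, y) \<in> measure (\<lambda>(d, F, lam, p). sum_list F + length F - (fst p + snd p))"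
    "((d, F, lam, Suc x, Suc y), d, F, lam, x, y) \<in> measure (\<lambda>(d, F, lam, p). sum_list F + length F - (fst p + snd p))"
    by auto
qed

declare Qb.simps[simp del]

definition Qm :: "nat \<Rightarrow> nat list \<Rightarrow> (nat \<Rightarrow> nat list) \<Rightarrow> nat \<times> nat \<Rightarrow> nat" where
  "Qm d F lam p = (if cell F p then bwdm d (Qb d F lam (fst p, Suc (snd p))) (Qb d F lam (Suc (fst p), snd p))
      (Qb d F lam (Suc (fst p), Suc (snd p))) else 0)"

lemma Qb_cell: "cell F (x, y) \<Longrightarrow> Qb d F lam (x, y) = bwdk d (Qb d F lam (x, Suc y)) (Qb d F lam (Suc x, y)) (Qb d F lam (Suc x, Suc y))"
  by (simp add: Qb.simps)

lemma Qb_ncell: "\<not> cell F (x, y) \<Longrightarrow> Qb d F lam (x, y) = lam (hd F + y - x)"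
  by (simp add: Qb.simps)

lemma cell_bounds: "is_partition F \<Longrightarrow> F \<noteq> [] \<Longrightarrow> cell F (x, y) \<Longrightarrow> x < hd F \<and> y < length F"
  unfolding cell_def using F_sorted[of F 0 y] hd_F by fastforce

lemma Qb_boundary:
  assumes F: "is_partition F" "F \<noteq> []" and l: "lattice_point F (x, y)" and nc: "\<not> cell F (x, y)"
  shows "Qb d F lam (x, y) = lam (hd F + y - x)" "hd F + y - x \<le> boundary_len F" "bpt F (hd F + y - x) = (x, y)"
  using Qb_ncell[OF nc] boundary_point[OF F l nc] by auto

lemma step_idx:
  assumes F: "is_partition F" "F \<noteq> []" and j: "Suc j \<le> boundary_len F"
  shows "bpt F (Suc j) = bstep F (bpt F j)"
  by simp

lemma Qb_rule:
  assumes d: "1 \<le> d" and F: "is_partition F" "F \<noteq> []" and T: "d_osc_tableau d (type_seq F) lam"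
  shows "cell F (x, y) \<Longrightarrow> rsk_local_rule d (Qm d F lam (x, y)) (Qb d F lam (x, y)) (Qb d F lam (x, Suc y))
     (Qb d F lam (Suc x, y)) (Qb d F lam (Suc x, Suc y))"
proof (induction "hd F + length F - (x + y)" arbitrary: x y rule: less_induct)
  case less
  note c = less.prems
  let ?Q = "Qb d F lam"
  have cb: "x < hd F" "y < length F" using cell_bounds[OF F c] by auto
  have T1: "\<And>i. i \<le> boundary_len F \<Longrightarrow> d_partition d (lam i)"
    and T2: "\<And>i. i \<in> {1..boundary_len F} \<Longrightarrow> (if type_seq F ! (i - 1) then interlaces (lam (i - 1)) (lam i)
                                         else interlaces (lam i) (lam (i - 1)))"
    using T unfolding d_osc_tableau_def length_type_seq by blast+
  have DP: "d_partition d (?Q p)" if lp: "lattice_point F p" and gt: "x + y < fst p + snd p" for p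
  proof (cases "cell F p")
    case True
    have "hd F + length F - (fst p + snd p) < hd F + length F - (x + y)" using gt cb by simp
    then have "rsk_local_rule d (Qm d F lam p) (?Q p) (?Q (fst p, Suc (snd p))) (?Q (Suc (fst p), snd p)) (?Q (Suc (fst p), Suc (snd p)))"
      using less.hyps[of "fst p" "snd p"] True by simp
    then show ?thesis unfolding rsk_local_rule_def by blast
  next
    case False
    obtain a b where ab: "p = (a, b)" by fastforce
    show ?thesis using Qb_boundary[OF F, of a b] T1 lp False ab by simp
  qed
  have L: "lattice_point F (x, Suc y)" "lattice_point F (Suc x, y)" "lattice_point F (Suc x, Suc y)"
    using cell_lattice[OF c] by auto
  have dm: "d_partition d (?Q (x, Suc y))" using DP[OF L(1)] by simp
  have dn: "d_partition d (?Q (Suc x, y))" using DP[OF L(2)] by simp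
  have dr: "d_partition d (?Q (Suc x, Suc y))" using DP[OF L(3)] by simp
  have mr: "interlaces (?Q (x, Suc y)) (?Q (Suc x, Suc y))"
  proof (cases "cell F (x, Suc y)")
    case True
    have "hd F + length F - (x + Suc y) < hd F + length F - (x + y)" using True cell_bounds[OF F True] by linarith
    then have "rsk_local_rule d (Qm d F lam (x, Suc y)) (?Q (x, Suc y)) (?Q (x, Suc (Suc y))) (?Q (Suc x, Suc y)) (?Q (Suc x, Suc (Suc y)))"
      using less.hyps True by simp
    then show ?thesis unfolding rsk_local_rule_def by blast
  next
    case False
    have nc2: "\<not> cell F (Suc x, Suc y)" using False cell_down[OF F(1), of "Suc x" "Suc y" x "Suc y"] by auto
    let ?j = "hd F + Suc y - Suc x"
    have B1: "?Q (Suc x, Suc y) = lam ?j" "bpt F ?j = (Suc x, Suc y)"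
      using Qb_boundary[OF F L(3) nc2] by auto
    have B2: "?Q (x, Suc y) = lam (Suc ?j)" "Suc ?j \<le> boundary_len F" "bpt F (Suc ?j) = (x, Suc y)"
      using Qb_boundary[OF F L(1) False] cb by (auto simp: Suc_diff_le)
    have "\<not> step_up F (Suc x, Suc y)" using B1(2) B2(3) by (auto simp: bstep_def)
    then have "\<not> type_seq F ! ?j" using type_seq_nth[of ?j F] B1(2) B2(2) by simp
    then show ?thesis using T2[of "Suc ?j"] B1 B2 by simp
  qed
  have nr: "interlaces (?Q (Suc x, y)) (?Q (Suc x, Suc y))"
  proof (cases "cell F (Suc x, y)")
    case True
    have "hd F + length F - (Suc x + y) < hd F + length F - (x + y)" using True cell_bounds[OF F True] by linarith
    then have "rsk_local_rule d (Qm d F lam (Suc x, y)) (?Q (Suc x, y)) (?Q (Suc x, Suc y)) (?Q (Suc (Suc x), y)) (?Q (Suc (Suc x), Suc y))"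
      using less.hyps True by simp
    then show ?thesis unfolding rsk_local_rule_def by blast
  next
    case False
    have nc2: "\<not> cell F (Suc x, Suc y)" using False cell_down[OF F(1), of "Suc x" "Suc y" "Suc x" y] by auto
    let ?j = "hd F + y - Suc x"
    have B1: "?Q (Suc x, y) = lam ?j" "bpt F ?j = (Suc x, y)"
      using Qb_boundary[OF F L(2) False] by auto
    have e: "hd F + Suc y - Suc x = Suc ?j" using cb by simp
    have B2: "?Q (Suc x, Suc y) = lam (Suc ?j)" "Suc ?j \<le> boundary_len F" "bpt F (Suc ?j) = (Suc x, Suc y)"
      using Qb_boundary[OF F L(3) nc2] unfolding e by auto
    have "step_up F (Suc x, y)" using B1(2) B2(3) by (auto simp: bstep_def split: if_splits)
    then have "type_seq F ! ?j" using type_seq_nth[of ?j F] B1(2) B2(2) by simp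
    then show ?thesis using T2[of "Suc ?j"] B1 B2 by simp
  qed
  have "rsk_local_rule d (bwdm d (?Q (x, Suc y)) (?Q (Suc x, y)) (?Q (Suc x, Suc y))) (bwdk d (?Q (x, Suc y)) (?Q (Suc x, y)) (?Q (Suc x, Suc y)))
     (?Q (x, Suc y)) (?Q (Suc x, y)) (?Q (Suc x, Suc y))"
    by (rule bwd_ok[OF d dm dn dr mr nr])
  then show ?case using Qb_cell[OF c] c unfolding Qm_def by simp
qed



lemma Qb_xaxis:
  assumes d: "1 \<le> d" and F: "is_partition F" "F \<noteq> []" and T: "d_osc_tableau d (type_seq F) lam"
  shows "lattice_point F (x, 0) \<Longrightarrow> Qb d F lam (x, 0) = []"
proof (induction "hd F - x" arbitrary: x rule: less_induct)
  case less
  show ?case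
  proof (cases "cell F (x, 0)")
    case True
    have R: "rsk_local_rule d (Qm d F lam (x, 0)) (Qb d F lam (x, 0)) (Qb d F lam (x, Suc 0))
     (Qb d F lam (Suc x, 0)) (Qb d F lam (Suc x, Suc 0))" by (rule Qb_rule[OF d F T True])
    have "x < hd F" using cell_bounds[OF F True] by simp
    then have "Qb d F lam (Suc x, 0) = []" using less.hyps[of "Suc x"] cell_lattice[OF True] by simp
    then show ?thesis using R interl_Nil unfolding rsk_local_rule_def by metis
  next
    case False
    have B: "Bp F (x, 0)" by (rule lattice_Bp[OF F less.prems False])
    then have "x = hd F" using hd_F[OF F(2)] F(2) unfolding Bp_def by (cases F) auto
    then show ?thesis using Qb_boundary(1)[OF F less.prems False] T unfolding d_osc_tableau_def by simp
  qed
qed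

lemma Qb_yaxis:
  assumes d: "1 \<le> d" and F: "is_partition F" "F \<noteq> []" and T: "d_osc_tableau d (type_seq F) lam"
  shows "lattice_point F (0, y) \<Longrightarrow> Qb d F lam (0, y) = []"
proof (induction "length F - y" arbitrary: y rule: less_induct)
  case less
  show ?case
  proof (cases "cell F (0, y)")
    case True
    have R: "rsk_local_rule d (Qm d F lam (0, y)) (Qb d F lam (0, y)) (Qb d F lam (0, Suc y))
     (Qb d F lam (Suc 0, y)) (Qb d F lam (Suc 0, Suc y))" by (rule Qb_rule[OF d F T True])
    have "y < length F" using cell_bounds[OF F True] by simp
    then have "Qb d F lam (0, Suc y) = []" using less.hyps[of "Suc y"] cell_lattice[OF True] by simp
    then show ?thesis using R interl_Nil unfolding rsk_local_rule_def by metis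
  next
    case False
    have B: "Bp F (0, y)" by (rule lattice_Bp[OF F less.prems False])
    have "y = length F"
    proof (rule ccontr)
      assume "y \<noteq> length F"
      then have "y < length F" using B unfolding Bp_def by simp
      then show False using B F_pos[OF F(1)] unfolding Bp_def by fastforce
    qed
    then show ?thesis using Qb_boundary(1)[OF F less.prems False] T
      unfolding d_osc_tableau_def length_type_seq boundary_len_def by simp
  qed
qed

lemma Qb_growth:
  assumes d: "1 \<le> d" and F: "is_partition F" "F \<noteq> []" and T: "d_osc_tableau d (type_seq F) lam"
  shows "growth_diagram d F (Qm d F lam) (Qb d F lam)"
  unfolding growth_diagram_def
proof (intro conjI allI impI)
  fix p assume p: "lattice_point F p \<and> (fst p = 0 \<or> snd p = 0)"
  obtain x y where xy: "p = (x, y)" by fastforce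
  show "Qb d F lam p = []" using p xy Qb_xaxis[OF d F T] Qb_yaxis[OF d F T] by auto
next
  fix x y assume "cell F (x, y)"
  then show "rsk_local_rule d (Qm d F lam (x, y)) (Qb d F lam (x, y)) (Qb d F lam (x, Suc y))
     (Qb d F lam (Suc x, y)) (Qb d F lam (Suc x, Suc y))" by (rule Qb_rule[OF d F T])
qed

lemma Qb_bdry:
  assumes F: "is_partition F" "F \<noteq> []" and i: "i \<le> boundary_len F"
  shows "Qb d F lam (bpt F i) = lam i"
proof -
  obtain x y where xy: "bpt F i = (x, y)" by fastforce
  have I: "Bp F (x, y)" "x + i = hd F + y" using bpt_inv[OF F i] xy by auto
  have "\<not> cell F (x, y)" using bpt_lattice(2)[OF F i] xy by simp
  then have "Qb d F lam (x, y) = lam (hd F + y - x)" by (rule Qb_ncell)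
  moreover have "hd F + y - x = i" using I by simp
  ultimately show ?thesis using xy by simp
qed

lemma Qb_unique:
  assumes d: "1 \<le> d" and F: "is_partition F" "F \<noteq> []"
    and g: "growth_diagram d F m' P'" and bd: "\<forall>i\<le>boundary_len F. P' (bpt F i) = lam i"
  shows "lattice_point F (x, y) \<Longrightarrow> P' (x, y) = Qb d F lam (x, y) \<and> (cell F (x, y) \<longrightarrow> m' (x, y) = Qm d F lam (x, y))"
proof (induction "hd F + length F - (x + y)" arbitrary: x y rule: less_induct)
  case less
  show ?case
  proof (cases "cell F (x, y)")
    case False
    have "P' (x, y) = lam (hd F + y - x)" using boundary_point[OF F less.prems False] bd by metis
    then show ?thesis using Qb_ncell[OF False] False by simp
  next
    case True
    have cb: "x < hd F" "y < length F" using cell_bounds[OF F True] by auto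
    have L: "lattice_point F (x, Suc y)" "lattice_point F (Suc x, y)" "lattice_point F (Suc x, Suc y)"
      using cell_lattice[OF True] by auto
    have e1: "P' (x, Suc y) = Qb d F lam (x, Suc y)" using less.hyps[OF _ L(1)] cb by simp
    have e2: "P' (Suc x, y) = Qb d F lam (Suc x, y)" using less.hyps[OF _ L(2)] cb by simp
    have e3: "P' (Suc x, Suc y) = Qb d F lam (Suc x, Suc y)" using less.hyps[OF _ L(3)] cb by simp
    have R: "rsk_local_rule d (m' (x, y)) (P' (x, y)) (P' (x, Suc y)) (P' (Suc x, y)) (P' (Suc x, Suc y))"
      by (rule growth_rule[OF g True])
    show ?thesis using bwd_unique[OF d R] e1 e2 e3 Qb_cell[OF True] True unfolding Qm_def by simp
  qed
qed

lemma osc_cong: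
  assumes T: "d_osc_tableau d w lam" and E: "\<And>i. i \<le> length w \<Longrightarrow> lam' i = lam i"
  shows "d_osc_tableau d w lam'"
proof -
  have T1: "lam 0 = []" "lam (length w) = []" "\<forall>i\<le>length w. d_partition d (lam i)"
    and T2: "\<forall>i\<in>{1..length w}. if w ! (i - 1) then interlaces (lam (i - 1)) (lam i)
                                         else interlaces (lam i) (lam (i - 1))"
    using T unfolding d_osc_tableau_def by blast+
  have "\<forall>i\<in>{1..length w}. if w ! (i - 1) then interlaces (lam' (i - 1)) (lam' i)
                                         else interlaces (lam' i) (lam' (i - 1))"
  proof
    fix i assume i: "i \<in> {1..length w}"
    have "lam' (i - 1) = lam (i - 1)" "lam' i = lam i" using E i by auto
    moreover have "if w ! (i - 1) then interlaces (lam (i - 1)) (lam i)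
                                         else interlaces (lam i) (lam (i - 1))" using T2 i by blast
    ultimately show "if w ! (i - 1) then interlaces (lam' (i - 1)) (lam' i)
                                         else interlaces (lam' i) (lam' (i - 1))" by (cases "w ! (i - 1)") auto
  qed
  moreover have "lam' 0 = []" "lam' (length w) = []" "\<forall>i\<le>length w. d_partition d (lam' i)"
    using T1 E by auto
  ultimately show ?thesis unfolding d_osc_tableau_def by blast
qed

theorem theorem3p3:
  fixes d :: nat and F :: "nat list" and w :: "bool list" and k :: nat
  assumes d_pos: "d \<ge> 1"
    and F_part: "is_partition F" and F_ne: "F \<noteq> []"
    and w_def: "w = type_seq F" and k_def: "k = length w"
  shows
    \<comment> \<open>(a)\<close>
    "(\<forall>m P. growth_diagram d F m P \<longrightarrow>
        d_osc_tableau d w (\<lambda>i. P (bpt F i)) \<and> avoids_pattern d F m)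
     \<and>
     \<comment> \<open>(b)\<close>
     (\<forall>m. avoids_pattern d F m \<longrightarrow>
        (\<exists>P. growth_diagram d F m P \<and>
           (\<forall>P'. growth_diagram d F m P' \<longrightarrow> (\<forall>p. lattice_point F p \<longrightarrow> P' p = P p))))
     \<and>
     \<comment> \<open>(c)\<close>
     (\<forall>lam. d_osc_tableau d w lam \<longrightarrow>
        (\<exists>m P. growth_diagram d F m P \<and> (\<forall>i\<le>k. P (bpt F i) = lam i) \<and>
           (\<forall>m' P'. growth_diagram d F m' P' \<and> (\<forall>i\<le>k. P' (bpt F i) = lam i) \<longrightarrow>
              (\<forall>c. cell F c \<longrightarrow> m' c = m c) \<and> (\<forall>p. lattice_point F p \<longrightarrow> P' p = P p))))
     \<and>
     \<comment> \<open>consequence: bijection given by reading off the boundary of the growth diagram\<close>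
     (\<exists>\<Phi>. bij_betw \<Phi> {m. avoids_pattern d F m \<and> (\<forall>c. \<not> cell F c \<longrightarrow> m c = 0)}
                     {ls. length ls = Suc k \<and> d_osc_tableau d w (\<lambda>i. ls ! i)} \<and>
          (\<forall>m. avoids_pattern d F m \<and> (\<forall>c. \<not> cell F c \<longrightarrow> m c = 0) \<longrightarrow>
             (\<exists>P. growth_diagram d F m P \<and> \<Phi> m = map (\<lambda>i. P (bpt F i)) [0..<Suc k])))"
proof -
  note F = F_part F_ne
  have kb: "k = boundary_len F" using k_def w_def length_type_seq by simp
  have A: "\<forall>m P. growth_diagram d F m P \<longrightarrow> d_osc_tableau d w (\<lambda>i. P (bpt F i)) \<and> avoids_pattern d F m"
    using part_a1[OF d_pos F] part_a2[OF d_pos F_part] w_def by blast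
  have Bu: "\<forall>p. lattice_point F p \<longrightarrow> P' p = PF d m p" if "growth_diagram d F m P'" for m P'
  proof (intro allI impI)
    fix p assume "lattice_point F p"
    then show "P' p = PF d m p" using part_b_unique[OF d_pos F_part that, of "fst p" "snd p"] by simp
  qed
  have B: "\<forall>m. avoids_pattern d F m \<longrightarrow>
        (\<exists>P. growth_diagram d F m P \<and>
           (\<forall>P'. growth_diagram d F m P' \<longrightarrow> (\<forall>p. lattice_point F p \<longrightarrow> P' p = P p)))"
    using part_b_exists[OF d_pos F_part] Bu by blast
  have Cu: "(\<forall>c. cell F c \<longrightarrow> m' c = Qm d F lam c) \<and> (\<forall>p. lattice_point F p \<longrightarrow> P' p = Qb d F lam p)"
    if "growth_diagram d F m' P'" "\<forall>i\<le>k. P' (bpt F i) = lam i" for m' P' lam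
  proof (intro conjI allI impI)
    fix c assume c: "cell F c"
    obtain x y where xy: "c = (x, y)" by fastforce
    show "m' c = Qm d F lam c" using Qb_unique[OF d_pos F that(1), of lam x y] that(2) kb c xy cell_lattice by auto
  next
    fix p assume p: "lattice_point F p"
    obtain x y where xy: "p = (x, y)" by fastforce
    show "P' p = Qb d F lam p" using Qb_unique[OF d_pos F that(1), of lam x y] that(2) kb p xy by auto
  qed
  have C: "\<forall>lam. d_osc_tableau d w lam \<longrightarrow>
        (\<exists>m P. growth_diagram d F m P \<and> (\<forall>i\<le>k. P (bpt F i) = lam i) \<and>
           (\<forall>m' P'. growth_diagram d F m' P' \<and> (\<forall>i\<le>k. P' (bpt F i) = lam i) \<longrightarrow>
              (\<forall>c. cell F c \<longrightarrow> m' c = m c) \<and> (\<forall>p. lattice_point F p \<longrightarrow> P' p = P p)))"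
  proof (intro allI impI)
    fix lam assume T: "d_osc_tableau d w lam"
    then have T': "d_osc_tableau d (type_seq F) lam" using w_def by simp
    show "\<exists>m P. growth_diagram d F m P \<and> (\<forall>i\<le>k. P (bpt F i) = lam i) \<and>
           (\<forall>m' P'. growth_diagram d F m' P' \<and> (\<forall>i\<le>k. P' (bpt F i) = lam i) \<longrightarrow>
              (\<forall>c. cell F c \<longrightarrow> m' c = m c) \<and> (\<forall>p. lattice_point F p \<longrightarrow> P' p = P p))"
      apply (rule exI[of _ "Qm d F lam"], rule exI[of _ "Qb d F lam"])
      using Qb_growth[OF d_pos F T'] Qb_bdry[OF F] kb Cu by blast
  qed
  define SA where "SA = {m. avoids_pattern d F m \<and> (\<forall>c. \<not> cell F c \<longrightarrow> m c = 0)}"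
  define SB where "SB = {ls. length ls = Suc k \<and> d_osc_tableau d w (\<lambda>i. ls ! i)}"
  define Phi where "Phi m = map (\<lambda>i. (SOME P. growth_diagram d F m P) (bpt F i)) [0..<Suc k]" for m
  have ex: "growth_diagram d F m (SOME P. growth_diagram d F m P)" if "m \<in> SA" for m
  proof -
    have "growth_diagram d F m (PF d m)" using part_b_exists[OF d_pos F_part] that SA_def by blast
    then show ?thesis by (rule someI[where P="\<lambda>P. growth_diagram d F m P"])
  qed
  have nth_Phi: "Phi m ! i = (SOME P. growth_diagram d F m P) (bpt F i)" if "i \<le> k" for m i
    using that unfolding Phi_def by (simp del: upt_Suc)
  have into: "Phi m \<in> SB" if m: "m \<in> SA" for m
  proof -
    have "d_osc_tableau d w (\<lambda>i. (SOME P. growth_diagram d F m P) (bpt F i))" using A ex[OF m] by blast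
    then have "d_osc_tableau d w (\<lambda>i. Phi m ! i)" by (rule osc_cong) (use nth_Phi k_def in simp)
    moreover have "length (Phi m) = Suc k" unfolding Phi_def by simp
    ultimately show ?thesis unfolding SB_def by simp
  qed
  have inj: "inj_on Phi SA"
  proof (rule inj_onI)
    fix m1 m2 assume m1: "m1 \<in> SA" and m2: "m2 \<in> SA" and e: "Phi m1 = Phi m2"
    let ?P1 = "SOME P. growth_diagram d F m1 P" and ?P2 = "SOME P. growth_diagram d F m2 P"
    let ?lam = "\<lambda>i. ?P1 (bpt F i)"
    have g1: "growth_diagram d F m1 ?P1" by (rule ex[OF m1])
    have g2: "growth_diagram d F m2 ?P2" by (rule ex[OF m2])
    have b2: "\<forall>i\<le>k. ?P2 (bpt F i) = ?lam i" using e nth_Phi by metis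
    have c1: "\<forall>c. cell F c \<longrightarrow> m1 c = Qm d F ?lam c" using Cu[OF g1] by simp
    have c2: "\<forall>c. cell F c \<longrightarrow> m2 c = Qm d F ?lam c" using Cu[OF g2 b2] by simp
    show "m1 = m2"
    proof
      fix c show "m1 c = m2 c"
      proof (cases "cell F c")
        case True
        have "m1 c = Qm d F ?lam c" "m2 c = Qm d F ?lam c" using c1 c2 True by blast+
        then show ?thesis by simp
      next
        case False
        have "m1 c = 0" "m2 c = 0" using m1 m2 False unfolding SA_def by blast+
        then show ?thesis by simp
      qed
    qed
  qed
  have onto: "SB \<subseteq> Phi ` SA"
  proof
    fix ls assume ls: "ls \<in> SB"
    let ?lam = "\<lambda>i. ls ! i"
    have T: "d_osc_tableau d (type_seq F) ?lam" using ls w_def unfolding SB_def by simp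
    let ?m = "Qm d F ?lam"
    have g: "growth_diagram d F ?m (Qb d F ?lam)" by (rule Qb_growth[OF d_pos F T])
    have mA: "?m \<in> SA" unfolding SA_def using part_a2[OF d_pos F_part g] by (simp add: Qm_def)
    have "Phi ?m = ls"
    proof (rule nth_equalityI)
      show "length (Phi ?m) = length ls" using ls unfolding SB_def Phi_def by simp
      fix i assume i: "i < length (Phi ?m)"
      then have ik: "i \<le> k" unfolding Phi_def by simp
      have gs: "growth_diagram d F ?m (SOME P. growth_diagram d F ?m P)" by (rule ex[OF mA])
      have l: "lattice_point F (bpt F i)" using bpt_lattice(1)[OF F] ik kb by simp
      have "(SOME P. growth_diagram d F ?m P) (bpt F i) = PF d ?m (bpt F i)" using Bu[OF gs] l by blast
      also have "\<dots> = Qb d F ?lam (bpt F i)" using Bu[OF g] l by metis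
      also have "\<dots> = ls ! i" using Qb_bdry[OF F] ik kb by simp
      finally show "Phi ?m ! i = ls ! i" using nth_Phi[OF ik] by simp
    qed
    then show "ls \<in> Phi ` SA" using mA by (metis image_eqI)
  qed
  have bij: "bij_betw Phi SA SB"
    unfolding bij_betw_def using inj into onto by blast
  have last: "\<forall>m. avoids_pattern d F m \<and> (\<forall>c. \<not> cell F c \<longrightarrow> m c = 0) \<longrightarrow>
             (\<exists>P. growth_diagram d F m P \<and> Phi m = map (\<lambda>i. P (bpt F i)) [0..<Suc k])"
  proof (intro allI impI)
    fix m assume "avoids_pattern d F m \<and> (\<forall>c. \<not> cell F c \<longrightarrow> m c = 0)"
    then have "m \<in> SA" unfolding SA_def by simp
    then show "\<exists>P. growth_diagram d F m P \<and> Phi m = map (\<lambda>i. P (bpt F i)) [0..<Suc k]"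
      using ex unfolding Phi_def by blast
  qed
  show ?thesis using A B C bij last unfolding SA_def SB_def by blast
qed

end
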